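(* Let $G$ be the group of affine transformations $T_{a,b}:x\mapsto ax+b$ of $\mathbb{Z}/8\mathbb{Z}$ ($a\in(\mathbb{Z}/8\mathbb{Z})^\times$, $b\in\mathbb{Z}/8\mathbb{Z}$), let $U_1=\langle T_{a,0}:a\in(\mathbb{Z}/8\mathbb{Z})^\times\rangle$, $U_2=\langle T_{-1,0},T_{3,4}\rangle$, and $\Theta=U_1-U_2$ (a $G$-relation). Let $\rho$ be an irreducible $\mathbb{Q}[G]$-representation. Then $\mathcal{C}_\Theta(\rho)\equiv2\pmod{(\mathbb{Q}^\times)^2}$ if $\rho\cong I$, and $\mathcal{C}_\Theta(\rho)\equiv1\pmod{(\mathbb{Q}^\times)^2}$ otherwise.
   Context: Let $N=\langle T_{1,b}:b\in\mathbb{Z}/8\mathbb{Z}\rangle$ and $\chi$ a faithful one-dimensional complex character of $N$; $I=\mathrm{Ind}_N^G\chi$ is a $4$-dimensional irreducible representation, realisable over $\mathbb{Q}$ and independent of the choice of $\chi$, regarded as an irreducible $\mathbb{Q}[G]$-representation. A $G$-relation is a formal integer combination $\sum_jn_jV_j$ of subgroups with $\bigoplus_{n_j>0}\mathbb{Q}[G/V_j]^{n_j}\cong\bigoplus_{n_j<0}\mathbb{Q}[G/V_j]^{-n_j}$; for a $\mathbb{Q}[G]$-module $A$ with any $G$-invariant non-degenerate $\mathbb{Q}$-bilinear pairing, $\mathcal{C}_\Theta(A)=\prod_j\det(\tfrac1{\#V_j}\langle\cdot,\cdot\rangle\mid A^{V_j})^{n_j}\in\mathbb{Q}^\times/(\mathbb{Q}^\times)^2$,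 independent of the pairing. *)

theory Defs
  imports "Jordan_Normal_Form.Determinant"
begin

text \<open>Z/8Z is modelled by the residues 0..7 (type nat, arithmetic mod 8).
  The affine map T_{a,b} : x -> a x + b is the pair (a,b).\<close>

definition units8 :: "nat set" where
  "units8 = {a. a < 8 \<and> coprime a 8}"

definition Gaff :: "(nat \<times> nat) set" where
  "Gaff = {(a, b). a \<in> units8 \<and> b < 8}"

text \<open>Composition T_{a,b} o T_{c,d} = T_{ac, ad+b}.\<close>
fun gmul :: "nat \<times> nat \<Rightarrow> nat \<times> nat \<Rightarrow> nat \<times> nat" where
  "gmul (a, b) (c, d) = ((a * c) mod 8, (a * d + b) mod 8)"

definition gone :: "nat \<times> nat" where
  "gone = (1, 0)"

inductive_set gen :: "(nat \<times> nat) set \<Rightarrow> (nat \<times> nat) set" for S where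
  gen_one: "gone \<in> gen S"
| gen_base: "x \<in> S \<Longrightarrow> x \<in> gen S"
| gen_mul: "x \<in> gen S \<Longrightarrow> y \<in> gen S \<Longrightarrow> gmul x y \<in> gen S"

definition U1 :: "(nat \<times> nat) set" where
  "U1 = gen {(a, 0) | a. a \<in> units8}"

text \<open>-1 in Z/8Z is the residue 7.\<close>
definition U2 :: "(nat \<times> nat) set" where
  "U2 = gen {(7, 0), (3, 4)}"

definition is_rep :: "nat \<Rightarrow> (nat \<times> nat \<Rightarrow> rat mat) \<Rightarrow> bool" where
  "is_rep n \<rho> \<longleftrightarrow>
     (\<forall>g\<in>Gaff. \<rho> g \<in> carrier_mat n n) \<and>
     \<rho> gone = 1\<^sub>m n \<and>
     (\<forall>g\<in>Gaff. \<forall>h\<in>Gaff. \<rho> (gmul g h) = \<rho> g * \<rho> h)"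

definition is_subspace :: "nat \<Rightarrow> rat vec set \<Rightarrow> bool" where
  "is_subspace n W \<longleftrightarrow> W \<subseteq> carrier_vec n \<and> 0\<^sub>v n \<in> W \<and>
     (\<forall>v\<in>W. \<forall>w\<in>W. v + w \<in> W) \<and> (\<forall>c. \<forall>v\<in>W. c \<cdot>\<^sub>v v \<in> W)"

definition irreducible_rep :: "nat \<Rightarrow> (nat \<times> nat \<Rightarrow> rat mat) \<Rightarrow> bool" where
  "irreducible_rep n \<rho> \<longleftrightarrow> is_rep n \<rho> \<and> n > 0 \<and>
     (\<forall>W. is_subspace n W \<and> (\<forall>g\<in>Gaff. \<forall>v\<in>W. \<rho> g *\<^sub>v v \<in> W)
          \<longrightarrow> W = {0\<^sub>v n} \<or> W = carrier_vec n)"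

text \<open>A rational model of
  Ind_N^G chi (chi faithful) is the field Q(zeta), zeta a primitive 8th root of
  unity, with T_{a,b} acting by x -> zeta^b * sigma_a(x), where sigma_a is the
  Galois automorphism zeta -> zeta^a.  Its complexification restricted to N is the
  sum of the four faithful characters of N, so it is Ind_N^G chi.  We use the
  Q-basis 1, zeta, zeta^2, zeta^3 (zeta^4 = -1); zeta_coord k is the coordinate
  vector of zeta^k.\<close>

definition N_sub :: "(nat \<times> nat) set" where
  "N_sub = gen {(1, b) | b. b < 8}"

definition zeta_coord :: "nat \<Rightarrow> rat vec" where
  "zeta_coord k = (if k mod 8 < 4 then unit_vec 4 (k mod 8)
                   else - unit_vec 4 (k mod 8 - 4))"

fun I_rep :: "nat \<times> nat \<Rightarrow> rat mat" where
  "I_rep (a, b) = mat 4 4 (\<lambda>(i, j). zeta_coord (b + a * j) $ i)"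

definition iso_to_I :: "nat \<Rightarrow> (nat \<times> nat \<Rightarrow> rat mat) \<Rightarrow> bool" where
  "iso_to_I n \<rho> \<longleftrightarrow> n = 4 \<and>
     (\<exists>P \<in> carrier_mat 4 4. invertible_mat P \<and> (\<forall>g\<in>Gaff. P * \<rho> g = I_rep g * P))"

text \<open>A bilinear pairing on Q^n is <v,w> = v^T B w; G-invariant and non-degenerate.\<close>
definition invariant_pairing :: "nat \<Rightarrow> (nat \<times> nat \<Rightarrow> rat mat) \<Rightarrow> rat mat \<Rightarrow> bool" where
  "invariant_pairing n \<rho> B \<longleftrightarrow> B \<in> carrier_mat n n \<and> det B \<noteq> 0 \<and>
     (\<forall>g\<in>Gaff. transpose_mat (\<rho> g) * B * \<rho> g = B)"

definition fixed_space :: "nat \<Rightarrow> (nat \<times> nat \<Rightarrow> rat mat) \<Rightarrow> (nat \<times> nat) set \<Rightarrow> rat vec set" where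
  "fixed_space n \<rho> V = {v \<in> carrier_vec n. \<forall>g\<in>V. \<rho> g *\<^sub>v v = v}"

definition basis_mat :: "nat \<Rightarrow> rat vec set \<Rightarrow> nat \<Rightarrow> rat mat \<Rightarrow> bool" where
  "basis_mat n W k M \<longleftrightarrow> M \<in> carrier_mat n k \<and>
     (\<forall>c\<in>carrier_vec k. M *\<^sub>v c = 0\<^sub>v n \<longrightarrow> c = 0\<^sub>v k) \<and>
     W = {M *\<^sub>v c | c. c \<in> carrier_vec k}"

text \<open>det( (1/#V) <.,.> | A^V ), computed in the basis given by the columns of M.\<close>
definition pairing_det :: "(nat \<times> nat) set \<Rightarrow> rat mat \<Rightarrow> rat mat \<Rightarrow> rat" where
  "pairing_det V B M = det ((1 / of_nat (card V)) \<cdot>\<^sub>m (transpose_mat M * B * M))"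

definition sq_class_eq :: "rat \<Rightarrow> rat \<Rightarrow> bool" where
  "sq_class_eq x c \<longleftrightarrow> (\<exists>q. q \<noteq> 0 \<and> x = c * q^2)"

end

theory Submission
  imports Defs
begin

declare One_nat_def[simp del]
lemma s2_nat[simp]: "Suc (Suc 0) = 2" by simp
lemma s1_nat[simp]: "Suc 0 = 1" by simp

lemma units8_eq: "units8 = {1,3,5,7}"
proof -
  have c8: "coprime a (8::nat) \<longleftrightarrow> odd a" for a
  proof -
    have "coprime a (8::nat) \<longleftrightarrow> coprime a ((2::nat)^3)" by simp
    also have "\<dots> \<longleftrightarrow> coprime a 2" by (simp only: coprime_power_right_iff) simp
    also have "\<dots> \<longleftrightarrow> odd a" by simp
    finally show ?thesis .
  qed
  have "(a < 8 \<and> odd a) \<longleftrightarrow> (a = 1 \<or> a = 3 \<or> a = 5 \<or> a = (7::nat))" for a by presburger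
  then show ?thesis unfolding units8_def c8 by auto
qed

lemma Gaff_iff: "(a,b) \<in> Gaff \<longleftrightarrow> (a = 1 \<or> a = 3 \<or> a = 5 \<or> a = 7) \<and> b < 8"
  unfolding Gaff_def units8_eq by auto

lemma gmul_Gaff: assumes "g \<in> Gaff" "h \<in> Gaff" shows "gmul g h \<in> Gaff"
proof -
  obtain a b where g: "g = (a,b)" by force
  obtain c d where h: "h = (c,d)" by force
  from assms show ?thesis unfolding g h by (auto simp: Gaff_iff)
qed

lemma gen_sub: assumes "S \<subseteq> T" "gone \<in> T" "\<And>x y. x \<in> T \<Longrightarrow> y \<in> T \<Longrightarrow> gmul x y \<in> T"
  shows "gen S \<subseteq> T"
proof
  fix x assume "x \<in> gen S" then show "x \<in> T"
    by (induction rule: gen.induct) (use assms in auto)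
qed

lemma U1_eq: "U1 = {(1,0),(3,0),(5,0),(7,0)}"
proof
  show "U1 \<subseteq> {(1,0),(3,0),(5,0),(7,0)}" unfolding U1_def
    by (rule gen_sub) (auto simp: units8_eq gone_def)
  show "{(1,0),(3,0),(5,0),(7,0)} \<subseteq> U1" unfolding U1_def
    using gen_one[of "{(a, 0) |a. a \<in> units8}"] gen_base[of _ "{(a, 0) |a. a \<in> units8}"]
    by (auto simp: units8_eq gone_def)
qed

lemma U2_eq: "U2 = {(1,0),(7,0),(3,4),(5,4)}"
proof
  show "U2 \<subseteq> {(1,0),(7,0),(3,4),(5,4)}" unfolding U2_def
    by (rule gen_sub) (auto simp: gone_def)
  have a: "(7,0) \<in> U2" "(3,4) \<in> U2" unfolding U2_def by (auto intro: gen_base)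
  have "gmul (7,0) (3,4) \<in> U2" unfolding U2_def by (rule gen_mul) (use a in \<open>auto simp: U2_def\<close>)
  then have "(5,4) \<in> U2" by simp
  moreover have "(1,0) \<in> U2" unfolding U2_def using gen_one by (simp add: gone_def)
  ultimately show "{(1,0),(7,0),(3,4),(5,4)} \<subseteq> U2" using a by auto
qed

lemma card_U1: "card U1 = 4" unfolding U1_eq by simp
lemma card_U2: "card U2 = 4" unfolding U2_eq by simp

definition lamI :: "nat \<Rightarrow> rat" where
  "lamI k = (if k mod 8 = 0 then 1 else if k mod 8 = 4 then -1 else 0)"
definition lam2 :: "nat \<Rightarrow> rat" where
  "lam2 k = (if k mod 4 = 0 then 1 else if k mod 4 = 2 then -1 else 0)"
definition lamT :: "nat \<Rightarrow> rat" where
  "lamT k = 1"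
definition lamC :: "nat \<Rightarrow> rat" where
  "lamC k = (if even k then 1 else -1)"

lemma even_mod8: "even ((a::nat) mod 8) = even a" by presburger

locale irr =
  fixes n :: nat and \<rho> :: "nat \<times> nat \<Rightarrow> rat mat" and B :: "rat mat"
  assumes irr: "irreducible_rep n \<rho>" and pair: "invariant_pairing n \<rho> B"
begin

lemma rep: "is_rep n \<rho>" using irr unfolding irreducible_rep_def by auto

lemma car[simp]: "g \<in> Gaff \<Longrightarrow> \<rho> g \<in> carrier_mat n n" using rep unfolding is_rep_def by auto
lemma dimr[simp]: "g \<in> Gaff \<Longrightarrow> dim_row (\<rho> g) = n" by (metis car carrier_matD(1))
lemma dimc[simp]: "g \<in> Gaff \<Longrightarrow> dim_col (\<rho> g) = n" by (metis car carrier_matD(2))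
lemma rho_gmul: "g \<in> Gaff \<Longrightarrow> h \<in> Gaff \<Longrightarrow> \<rho> (gmul g h) = \<rho> g * \<rho> h"
  using rep unfolding is_rep_def by auto
lemma rho1[simp]: "\<rho> (1,0) = 1\<^sub>m n" using rep unfolding is_rep_def gone_def by auto
lemma B_car[simp]: "B \<in> carrier_mat n n" using pair unfolding invariant_pairing_def by auto
lemma detB: "det B \<noteq> 0" using pair unfolding invariant_pairing_def by auto
lemma Binv: "g \<in> Gaff \<Longrightarrow> transpose_mat (\<rho> g) * B * \<rho> g = B"
  using pair unfolding invariant_pairing_def by auto

lemma mv[simp]: "g \<in> Gaff \<Longrightarrow> h \<in> Gaff \<Longrightarrow> x \<in> carrier_vec n \<Longrightarrow>
   \<rho> g *\<^sub>v (\<rho> h *\<^sub>v x) = \<rho> (gmul g h) *\<^sub>v x"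
  by (simp add: rho_gmul assoc_mult_mat_vec[OF car car])

lemma mv_car[simp]: "g \<in> Gaff \<Longrightarrow> x \<in> carrier_vec n \<Longrightarrow> \<rho> g *\<^sub>v x \<in> carrier_vec n"
  using car by (metis mult_mat_vec_carrier)

lemma dim_car[simp]: "x \<in> carrier_vec n \<Longrightarrow> dim_vec x = n" by auto

lemma rho_add[simp]: "g \<in> Gaff \<Longrightarrow> x \<in> carrier_vec n \<Longrightarrow> y \<in> carrier_vec n \<Longrightarrow>
   \<rho> g *\<^sub>v (x + y) = \<rho> g *\<^sub>v x + \<rho> g *\<^sub>v y"
  by (rule mult_add_distrib_mat_vec[OF car])

lemma rho_smult[simp]: "g \<in> Gaff \<Longrightarrow> x \<in> carrier_vec n \<Longrightarrow>
   \<rho> g *\<^sub>v (k \<cdot>\<^sub>v x) = k \<cdot>\<^sub>v (\<rho> g *\<^sub>v x)"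
  by (rule mult_mat_vec[OF car])

lemma rho_zero[simp]: "g \<in> Gaff \<Longrightarrow> \<rho> g *\<^sub>v 0\<^sub>v n = 0\<^sub>v n"
  using car by (intro eq_vecI) auto

definition P1 :: "rat vec \<Rightarrow> rat vec" where
  "P1 x = (1/4) \<cdot>\<^sub>v (x + \<rho> (3,0) *\<^sub>v x + \<rho> (5,0) *\<^sub>v x + \<rho> (7,0) *\<^sub>v x)"
definition P2 :: "rat vec \<Rightarrow> rat vec" where
  "P2 x = (1/4) \<cdot>\<^sub>v (x + \<rho> (7,0) *\<^sub>v x + \<rho> (3,4) *\<^sub>v x + \<rho> (5,4) *\<^sub>v x)"

lemma P1_car[simp]: "x \<in> carrier_vec n \<Longrightarrow> P1 x \<in> carrier_vec n"
  unfolding P1_def by (simp add: Gaff_iff)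
lemma P2_car[simp]: "x \<in> carrier_vec n \<Longrightarrow> P2 x \<in> carrier_vec n"
  unfolding P2_def by (simp add: Gaff_iff)

lemma fix1_iff: "x \<in> fixed_space n \<rho> U1 \<longleftrightarrow> x \<in> carrier_vec n \<and>
   \<rho> (3,0) *\<^sub>v x = x \<and> \<rho> (5,0) *\<^sub>v x = x \<and> \<rho> (7,0) *\<^sub>v x = x"
  unfolding fixed_space_def U1_eq by auto
lemma fix2_iff: "x \<in> fixed_space n \<rho> U2 \<longleftrightarrow> x \<in> carrier_vec n \<and>
   \<rho> (7,0) *\<^sub>v x = x \<and> \<rho> (3,4) *\<^sub>v x = x \<and> \<rho> (5,4) *\<^sub>v x = x"
  unfolding fixed_space_def U2_eq by auto

lemma sum4_perm: fixes a b c d :: "rat vec"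
  assumes "a \<in> carrier_vec n" "b \<in> carrier_vec n" "c \<in> carrier_vec n" "d \<in> carrier_vec n"
  shows "a + b + c + d = b + a + d + c" "a + b + c + d = c + d + a + b" "a + b + c + d = d + c + b + a"
  using assms by (auto intro!: eq_vecI)

lemma P1_fix: assumes x: "x \<in> carrier_vec n" shows "P1 x \<in> fixed_space n \<rho> U1"
proof -
  have g: "(3,0) \<in> Gaff" "(5,0) \<in> Gaff" "(7,0) \<in> Gaff" by (auto simp: Gaff_iff)
  note c = mv_car[OF g(1) x] mv_car[OF g(2) x] mv_car[OF g(3) x]
  have "\<rho> (3,0) *\<^sub>v P1 x = (1/4) \<cdot>\<^sub>v (\<rho> (3,0) *\<^sub>v x + x + \<rho> (7,0) *\<^sub>v x + \<rho> (5,0) *\<^sub>v x)"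
    unfolding P1_def using x c by (simp add: Gaff_iff) (intro eq_vecI; simp add: Gaff_iff ac_simps del: index_mult_mat_vec)
  also have "\<dots> = P1 x" unfolding P1_def using sum4_perm(1)[OF x c] by simp
  finally have 3: "\<rho> (3,0) *\<^sub>v P1 x = P1 x" .
  have "\<rho> (5,0) *\<^sub>v P1 x = (1/4) \<cdot>\<^sub>v (\<rho> (5,0) *\<^sub>v x + \<rho> (7,0) *\<^sub>v x + x + \<rho> (3,0) *\<^sub>v x)"
    unfolding P1_def using x c by (simp add: Gaff_iff) (intro eq_vecI; simp add: Gaff_iff ac_simps del: index_mult_mat_vec)
  also have "\<dots> = P1 x" unfolding P1_def using sum4_perm(2)[OF x c] by simp
  finally have 5: "\<rho> (5,0) *\<^sub>v P1 x = P1 x" .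
  have "\<rho> (7,0) *\<^sub>v P1 x = (1/4) \<cdot>\<^sub>v (\<rho> (7,0) *\<^sub>v x + \<rho> (5,0) *\<^sub>v x + \<rho> (3,0) *\<^sub>v x + x)"
    unfolding P1_def using x c by (simp add: Gaff_iff) (intro eq_vecI; simp add: Gaff_iff ac_simps del: index_mult_mat_vec)
  also have "\<dots> = P1 x" unfolding P1_def using sum4_perm(3)[OF x c] by simp
  finally have 7: "\<rho> (7,0) *\<^sub>v P1 x = P1 x" .
  show ?thesis using 3 5 7 x by (simp add: fix1_iff)
qed

lemma P2_fix: assumes x: "x \<in> carrier_vec n" shows "P2 x \<in> fixed_space n \<rho> U2"
proof -
  have g: "(7,0) \<in> Gaff" "(3,4) \<in> Gaff" "(5,4) \<in> Gaff" by (auto simp: Gaff_iff)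
  note c = mv_car[OF g(1) x] mv_car[OF g(2) x] mv_car[OF g(3) x]
  have "\<rho> (7,0) *\<^sub>v P2 x = (1/4) \<cdot>\<^sub>v (\<rho> (7,0) *\<^sub>v x + x + \<rho> (5,4) *\<^sub>v x + \<rho> (3,4) *\<^sub>v x)"
    unfolding P2_def using x c by (simp add: Gaff_iff) (intro eq_vecI; simp add: Gaff_iff ac_simps del: index_mult_mat_vec)
  also have "\<dots> = P2 x" unfolding P2_def using sum4_perm(1)[OF x c] by simp
  finally have 3: "\<rho> (7,0) *\<^sub>v P2 x = P2 x" .
  have "\<rho> (3,4) *\<^sub>v P2 x = (1/4) \<cdot>\<^sub>v (\<rho> (3,4) *\<^sub>v x + \<rho> (5,4) *\<^sub>v x + x + \<rho> (7,0) *\<^sub>v x)"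
    unfolding P2_def using x c by (simp add: Gaff_iff) (intro eq_vecI; simp add: Gaff_iff ac_simps del: index_mult_mat_vec)
  also have "\<dots> = P2 x" unfolding P2_def using sum4_perm(2)[OF x c] by simp
  finally have 5: "\<rho> (3,4) *\<^sub>v P2 x = P2 x" .
  have "\<rho> (5,4) *\<^sub>v P2 x = (1/4) \<cdot>\<^sub>v (\<rho> (5,4) *\<^sub>v x + \<rho> (3,4) *\<^sub>v x + \<rho> (7,0) *\<^sub>v x + x)"
    unfolding P2_def using x c by (simp add: Gaff_iff) (intro eq_vecI; simp add: Gaff_iff ac_simps del: index_mult_mat_vec)
  also have "\<dots> = P2 x" unfolding P2_def using sum4_perm(3)[OF x c] by simp
  finally have 7: "\<rho> (5,4) *\<^sub>v P2 x = P2 x" .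
  show ?thesis using 3 5 7 x by (simp add: fix2_iff)
qed

lemma fix1_P: "x \<in> fixed_space n \<rho> U1 \<longleftrightarrow> x \<in> carrier_vec n \<and> P1 x = x"
proof
  assume "x \<in> fixed_space n \<rho> U1"
  then show "x \<in> carrier_vec n \<and> P1 x = x" unfolding fix1_iff P1_def
    by (auto intro!: eq_vecI)
next
  assume a: "x \<in> carrier_vec n \<and> P1 x = x"
  then show "x \<in> fixed_space n \<rho> U1" using P1_fix[of x] by auto
qed

lemma fix2_P: "x \<in> fixed_space n \<rho> U2 \<longleftrightarrow> x \<in> carrier_vec n \<and> P2 x = x"
proof
  assume "x \<in> fixed_space n \<rho> U2"
  then show "x \<in> carrier_vec n \<and> P2 x = x" unfolding fix2_iff P2_def
    by (auto intro!: eq_vecI)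
next
  assume a: "x \<in> carrier_vec n \<and> P2 x = x"
  then show "x \<in> fixed_space n \<rho> U2" using P2_fix[of x] by auto
qed

lemma caseA: assumes A: "fixed_space n \<rho> U1 = {0\<^sub>v n}" shows "fixed_space n \<rho> U2 = {0\<^sub>v n}"
proof -
  have "x = 0\<^sub>v n" if x2: "x \<in> fixed_space n \<rho> U2" for x
  proof -
    from x2 have x: "x \<in> carrier_vec n" and f7: "\<rho> (7,0) *\<^sub>v x = x" and f34: "\<rho> (3,4) *\<^sub>v x = x"
      and f54: "\<rho> (5,4) *\<^sub>v x = x" unfolding fix2_iff by auto
    have z: "P1 y = 0\<^sub>v n" if "y \<in> carrier_vec n" for y using P1_fix[OF that] A by auto
    have e30: "\<rho> (3,0) *\<^sub>v x = \<rho> (1,4) *\<^sub>v x"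
      using mv[of "(3,0)" "(3,4)" x] x f34 by (simp add: Gaff_iff)
    have e50: "\<rho> (5,0) *\<^sub>v x = \<rho> (1,4) *\<^sub>v x"
      using mv[of "(5,0)" "(5,4)" x] x f54 by (simp add: Gaff_iff)
    have e36: "\<rho> (3,6) *\<^sub>v x = \<rho> (1,2) *\<^sub>v x"
      using mv[of "(3,6)" "(3,4)" x] x f34 by (simp add: Gaff_iff)
    have e72: "\<rho> (7,2) *\<^sub>v x = \<rho> (1,2) *\<^sub>v x"
      using mv[of "(7,2)" "(7,0)" x] x f7 by (simp add: Gaff_iff)
    have h1: "P1 x = 0\<^sub>v n" using z x by auto
    have h2: "\<rho> (1,1) *\<^sub>v P1 (\<rho> (1,7) *\<^sub>v x) = 0\<^sub>v n" using z x by (simp add: Gaff_iff)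
    have h2': "\<rho> (1,1) *\<^sub>v P1 (\<rho> (1,7) *\<^sub>v x) = (1/4) \<cdot>\<^sub>v (x + \<rho> (3,6) *\<^sub>v x + \<rho> (5,4) *\<^sub>v x + \<rho> (7,2) *\<^sub>v x)"
      unfolding P1_def using x by (simp add: Gaff_iff)
    have c1: "x $ i + (\<rho> (1,4) *\<^sub>v x) $ i = 0" if "i < n" for i
    proof -
      have "P1 x $ i = 0" using h1 that by simp
      then show ?thesis using that x unfolding P1_def e30 e50 f7 by (simp add: Gaff_iff)
    qed
    have c2: "x $ i + (\<rho> (1,2) *\<^sub>v x) $ i = 0" if "i < n" for i
    proof -
      have "(\<rho> (1,1) *\<^sub>v P1 (\<rho> (1,7) *\<^sub>v x)) $ i = 0" using h2 that by simp
      then show ?thesis using that x unfolding h2' e36 e72 f54 by (simp add: Gaff_iff)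
    qed
    have e0: "\<rho> (1,4) *\<^sub>v x = \<rho> (1,2) *\<^sub>v (\<rho> (1,2) *\<^sub>v x)" using x by (simp add: Gaff_iff)
    have m2: "\<rho> (1,2) *\<^sub>v x = (-1) \<cdot>\<^sub>v x"
    proof (rule eq_vecI)
      fix i assume "i < dim_vec ((-1) \<cdot>\<^sub>v x)"
      then have i: "i < n" using x by simp
      show "(\<rho> (1,2) *\<^sub>v x) $ i = ((-1) \<cdot>\<^sub>v x) $ i"
        using c2[OF i] i x by (simp add: Gaff_iff del: index_mult_mat_vec)
    qed (use x in \<open>simp add: Gaff_iff\<close>)
    have m3: "\<rho> (1,2) *\<^sub>v ((-1) \<cdot>\<^sub>v x) = (-1) \<cdot>\<^sub>v (\<rho> (1,2) *\<^sub>v x)"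
      by (rule rho_smult) (use x in \<open>auto simp: Gaff_iff\<close>)
    have e: "\<rho> (1,4) *\<^sub>v x = (-1) \<cdot>\<^sub>v (\<rho> (1,2) *\<^sub>v x)" by (simp only: e0 m2 m3)
    show "x = 0\<^sub>v n"
    proof (rule eq_vecI)
      fix i assume "i < dim_vec (0\<^sub>v n :: rat vec)"
      then have i: "i < n" by simp
      have "(\<rho> (1,4) *\<^sub>v x) $ i = - (\<rho> (1,2) *\<^sub>v x) $ i" unfolding e using i by (simp add: Gaff_iff del: index_mult_mat_vec)
      then show "x $ i = (0\<^sub>v n :: rat vec) $ i" using c1[OF i] c2[OF i] i by (simp del: index_mult_mat_vec)
    qed (use x in simp)
  qed
  moreover have "0\<^sub>v n \<in> fixed_space n \<rho> U2" unfolding fix2_iff by (simp add: Gaff_iff)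
  ultimately show ?thesis by blast
qed


lemma P1_add: "x \<in> carrier_vec n \<Longrightarrow> y \<in> carrier_vec n \<Longrightarrow> P1 (x + y) = P1 x + P1 y"
  unfolding P1_def by (simp add: Gaff_iff) (intro eq_vecI; simp add: Gaff_iff algebra_simps del: index_mult_mat_vec)
lemma P1_smult: "x \<in> carrier_vec n \<Longrightarrow> P1 (k \<cdot>\<^sub>v x) = k \<cdot>\<^sub>v P1 x"
  unfolding P1_def by (simp add: Gaff_iff) (intro eq_vecI; simp add: Gaff_iff algebra_simps del: index_mult_mat_vec)
lemma P2_add: "x \<in> carrier_vec n \<Longrightarrow> y \<in> carrier_vec n \<Longrightarrow> P2 (x + y) = P2 x + P2 y"
  unfolding P2_def by (simp add: Gaff_iff) (intro eq_vecI; simp add: Gaff_iff algebra_simps del: index_mult_mat_vec)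
lemma P2_smult: "x \<in> carrier_vec n \<Longrightarrow> P2 (k \<cdot>\<^sub>v x) = k \<cdot>\<^sub>v P2 x"
  unfolding P2_def by (simp add: Gaff_iff) (intro eq_vecI; simp add: Gaff_iff algebra_simps del: index_mult_mat_vec)

lemma P1_absorb: assumes y: "y \<in> carrier_vec n" and u: "u = (3,0) \<or> u = (5,0) \<or> u = (7,0)"
  shows "P1 (\<rho> u *\<^sub>v y) = P1 y"
  using u
proof (elim disjE)
  have g: "(3,0) \<in> Gaff" "(5,0) \<in> Gaff" "(7,0) \<in> Gaff" by (auto simp: Gaff_iff)
  note c = mv_car[OF g(1) y] mv_car[OF g(2) y] mv_car[OF g(3) y]
  assume "u = (3,0)"
  then show ?thesis unfolding P1_def using y c
    by (simp add: Gaff_iff) (intro eq_vecI; simp add: Gaff_iff ac_simps del: index_mult_mat_vec)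
next
  have g: "(3,0) \<in> Gaff" "(5,0) \<in> Gaff" "(7,0) \<in> Gaff" by (auto simp: Gaff_iff)
  note c = mv_car[OF g(1) y] mv_car[OF g(2) y] mv_car[OF g(3) y]
  assume "u = (5,0)"
  then show ?thesis unfolding P1_def using y c
    by (simp add: Gaff_iff) (intro eq_vecI; simp add: Gaff_iff ac_simps del: index_mult_mat_vec)
next
  have g: "(3,0) \<in> Gaff" "(5,0) \<in> Gaff" "(7,0) \<in> Gaff" by (auto simp: Gaff_iff)
  note c = mv_car[OF g(1) y] mv_car[OF g(2) y] mv_car[OF g(3) y]
  assume "u = (7,0)"
  then show ?thesis unfolding P1_def using y c
    by (simp add: Gaff_iff) (intro eq_vecI; simp add: Gaff_iff ac_simps del: index_mult_mat_vec)
qed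

lemma fix_unit: assumes v: "v \<in> fixed_space n \<rho> U1" and a: "a = 1 \<or> a = 3 \<or> a = 5 \<or> a = 7"
  and e: "e < 8" shows "\<rho> (a,e) *\<^sub>v v = \<rho> (1,e) *\<^sub>v v"
proof -
  have vc: "v \<in> carrier_vec n" and f: "\<rho> (a,0) *\<^sub>v v = v" using v a unfolding fix1_iff by auto
  have "\<rho> (1,e) *\<^sub>v v = \<rho> (1,e) *\<^sub>v (\<rho> (a,0) *\<^sub>v v)" using f by simp
  also have "\<dots> = \<rho> (a,e) *\<^sub>v v" using a e vc by (subst mv) (auto simp: Gaff_iff)
  finally show ?thesis by simp
qed

definition op :: "nat \<Rightarrow> rat vec \<Rightarrow> rat vec" where
  "op a y = P1 (\<rho> (1, a mod 8) *\<^sub>v y)"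

lemma op_car[simp]: "y \<in> carrier_vec n \<Longrightarrow> op a y \<in> carrier_vec n"
  unfolding op_def by (simp add: Gaff_iff)
lemma op_add: "x \<in> carrier_vec n \<Longrightarrow> y \<in> carrier_vec n \<Longrightarrow> op a (x + y) = op a x + op a y"
  unfolding op_def by (simp add: Gaff_iff P1_add)
lemma op_smult: "x \<in> carrier_vec n \<Longrightarrow> op a (k \<cdot>\<^sub>v x) = k \<cdot>\<^sub>v op a x"
  unfolding op_def by (simp add: Gaff_iff P1_smult)
lemma op_mod: "op (a mod 8) y = op a y" unfolding op_def by simp

lemma opX_gen: assumes v: "v \<in> fixed_space n \<rho> U1" and u: "u = 1 \<or> u = 3 \<or> u = 5 \<or> u = 7"
  shows "op a (\<rho> (u,0) *\<^sub>v (\<rho> (1, b mod 8) *\<^sub>v v)) = P1 (\<rho> (1, (a + u * b) mod 8) *\<^sub>v v)"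
proof -
  have vc: "v \<in> carrier_vec n" using v unfolding fix1_iff by auto
  have e: "((u * (b mod 8)) mod 8 + a mod 8) mod 8 = (a + u * b) mod 8"
    by (metis add.commute mod_add_eq mod_mult_right_eq)
  have "\<rho> (1, a mod 8) *\<^sub>v (\<rho> (u,0) *\<^sub>v (\<rho> (1, b mod 8) *\<^sub>v v)) =
        \<rho> (u, ((u * (b mod 8)) mod 8 + a mod 8) mod 8) *\<^sub>v v"
    using u vc by (elim disjE) (simp_all add: Gaff_iff)
  also have "\<dots> = \<rho> (1, (a + u * b) mod 8) *\<^sub>v v" unfolding e by (rule fix_unit[OF v u]) simp
  finally show ?thesis unfolding op_def by simp
qed

lemma eigen_exists: assumes v: "v \<in> fixed_space n \<rho> U1" and v0: "v \<noteq> 0\<^sub>v n"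
  shows "\<exists>w L. w \<in> fixed_space n \<rho> U1 \<and> w \<noteq> 0\<^sub>v n \<and> L \<in> {lamI, lam2, lamT, lamC} \<and>
     (\<forall>a. op a w = L a \<cdot>\<^sub>v w)"
proof -
  have vc: "v \<in> carrier_vec n" using v unfolding fix1_iff by auto
  define X where "X c = P1 (\<rho> (1, c mod 8) *\<^sub>v v)" for c
  have Xc[simp]: "X c \<in> carrier_vec n" for c unfolding X_def using vc by (simp add: Gaff_iff)
  have X0: "X 0 = v" unfolding X_def using v vc fix1_P by auto
  have Xsym: "X (u * c) = X c" if u: "u = 3 \<or> u = 5 \<or> u = 7" for u c
  proof -
    have "\<rho> (1, (u * c) mod 8) *\<^sub>v v = \<rho> (u,0) *\<^sub>v (\<rho> (1, c mod 8) *\<^sub>v (\<rho> (u,0) *\<^sub>v v))"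
    proof -
      have f: "\<rho> (u,0) *\<^sub>v v = v" using v u unfolding fix1_iff by auto
      have e: "(u * (c mod 8)) mod 8 = (u * c) mod 8" by (simp add: mod_mult_right_eq)
      show ?thesis using u vc e by (elim disjE) (simp_all add: Gaff_iff)
    qed
    also have "\<dots> = \<rho> (u,0) *\<^sub>v (\<rho> (1, c mod 8) *\<^sub>v v)"
      using v u unfolding fix1_iff by auto
    finally have e: "\<rho> (1, (u * c) mod 8) *\<^sub>v v = \<rho> (u,0) *\<^sub>v (\<rho> (1, c mod 8) *\<^sub>v v)" .
    have "P1 (\<rho> (u,0) *\<^sub>v (\<rho> (1, c mod 8) *\<^sub>v v)) = P1 (\<rho> (1, c mod 8) *\<^sub>v v)"
      by (rule P1_absorb) (use u vc in \<open>auto simp: Gaff_iff\<close>)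
    then show ?thesis unfolding X_def e .
  qed
  have Xmod: "X c = X (c mod 8)" for c unfolding X_def by simp
  have Xred: "X k = (if k mod 8 = 0 then X 0 else if k mod 8 = 4 then X 4 else
      if k mod 8 = 2 \<or> k mod 8 = 6 then X 2 else X 1)" for k
  proof -
    have r: "k mod 8 < 8" by simp
    have "X k = X (k mod 8)" by (rule Xmod)
    moreover have "X 6 = X 2" using Xsym[of 3 2] by simp
    moreover have "X 3 = X 1" using Xsym[of 3 1] by simp
    moreover have "X 5 = X 1" using Xsym[of 5 1] by simp
    moreover have "X 7 = X 1" using Xsym[of 7 1] by simp
    moreover have "k mod 8 = 0 \<or> k mod 8 = 1 \<or> k mod 8 = 2 \<or> k mod 8 = 3 \<or> k mod 8 = 4 \<or>
       k mod 8 = 5 \<or> k mod 8 = 6 \<or> k mod 8 = 7" by presburger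
    ultimately show ?thesis by auto
  qed
  have opX: "op a (X b) = (1/4) \<cdot>\<^sub>v (X (a + b) + X (a + 3 * b) + X (a + 5 * b) + X (a + 7 * b))" for a b
  proof -
    let ?y = "\<rho> (1, b mod 8) *\<^sub>v v"
    have yc: "?y \<in> carrier_vec n" using vc by (simp add: Gaff_iff)
    have "op a (X b) = op a ((1/4) \<cdot>\<^sub>v (\<rho> (1,0) *\<^sub>v ?y + \<rho> (3,0) *\<^sub>v ?y + \<rho> (5,0) *\<^sub>v ?y + \<rho> (7,0) *\<^sub>v ?y))"
      unfolding X_def P1_def using yc by simp
    also have "\<dots> = (1/4) \<cdot>\<^sub>v (op a (\<rho> (1,0) *\<^sub>v ?y) + op a (\<rho> (3,0) *\<^sub>v ?y) + op a (\<rho> (5,0) *\<^sub>v ?y) + op a (\<rho> (7,0) *\<^sub>v ?y))"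
      using yc by (simp add: op_add op_smult Gaff_iff) (intro eq_vecI; simp add: Gaff_iff ac_simps del: index_mult_mat_vec)
    also have "\<dots> = (1/4) \<cdot>\<^sub>v (X (a + b) + X (a + 3 * b) + X (a + 5 * b) + X (a + 7 * b))"
      unfolding X_def using opX_gen[OF v, of 1 a b] opX_gen[OF v, of 3 a b] opX_gen[OF v, of 5 a b] opX_gen[OF v, of 7 a b]
      by simp
    finally show ?thesis .
  qed
  define x0 where "x0 = X 0"
  define x4 where "x4 = X 4"
  define x2 where "x2 = X 2"
  define x1 where "x1 = X 1"
  have Xr: "X k = (if k mod 8 = 0 then x0 else if k mod 8 = 4 then x4 else
      if k mod 8 = 2 \<or> k mod 8 = 6 then x2 else x1)" for k
    unfolding x0_def x4_def x2_def x1_def by (rule Xred)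
  have xc[simp]: "x0 \<in> carrier_vec n" "x4 \<in> carrier_vec n" "x2 \<in> carrier_vec n" "x1 \<in> carrier_vec n"
    unfolding x0_def x4_def x2_def x1_def by auto
  have opx: "op a x0 = (1/4) \<cdot>\<^sub>v (X (a + 0) + X (a + 3 * 0) + X (a + 5 * 0) + X (a + 7 * 0))"
    "op a x4 = (1/4) \<cdot>\<^sub>v (X (a + 4) + X (a + 3 * 4) + X (a + 5 * 4) + X (a + 7 * 4))"
    "op a x2 = (1/4) \<cdot>\<^sub>v (X (a + 2) + X (a + 3 * 2) + X (a + 5 * 2) + X (a + 7 * 2))"
    "op a x1 = (1/4) \<cdot>\<^sub>v (X (a + 1) + X (a + 3 * 1) + X (a + 5 * 1) + X (a + 7 * 1))" for a
    unfolding x0_def x4_def x2_def x1_def by (rule opX)+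
  define wv where "wv p q r t = p \<cdot>\<^sub>v x0 + q \<cdot>\<^sub>v x4 + r \<cdot>\<^sub>v x2 + t \<cdot>\<^sub>v x1" for p q r t
  have wvc[simp]: "wv p q r t \<in> carrier_vec n" for p q r t unfolding wv_def by simp
  have wv_add: "wv p q r t + wv p' q' r' t' = wv (p + p') (q + q') (r + r') (t + t')" for p q r t p' q' r' t'
    unfolding wv_def by (intro eq_vecI) (simp_all add: algebra_simps)
  have wv_smult: "k \<cdot>\<^sub>v wv p q r t = wv (k * p) (k * q) (k * r) (k * t)" for k p q r t
    unfolding wv_def by (intro eq_vecI) (simp_all add: algebra_simps)
  define e0 :: "nat \<Rightarrow> rat" where "e0 k = (if k mod 8 = 0 then 1 else 0)" for k
  define e4 :: "nat \<Rightarrow> rat" where "e4 k = (if k mod 8 = 4 then 1 else 0)" for k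
  define e2 :: "nat \<Rightarrow> rat" where "e2 k = (if k mod 8 = 2 \<or> k mod 8 = 6 then 1 else 0)" for k
  define e1 :: "nat \<Rightarrow> rat" where "e1 k = (if odd k then 1 else 0)" for k
  have X_wv: "X k = wv (e0 k) (e4 k) (e2 k) (e1 k)" for k
  proof -
    have o: "odd k \<longleftrightarrow> \<not> (k mod 8 = 0 \<or> k mod 8 = 4 \<or> k mod 8 = 2 \<or> k mod 8 = 6)" by presburger
    show ?thesis unfolding Xr wv_def e0_def e4_def e2_def e1_def o
      by (intro eq_vecI) (auto simp: algebra_simps)
  qed
  have opwv: "op a (wv p q r t) = p \<cdot>\<^sub>v op a x0 + q \<cdot>\<^sub>v op a x4 + r \<cdot>\<^sub>v op a x2 + t \<cdot>\<^sub>v op a x1" for a p q r t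
    unfolding wv_def by (simp add: op_add op_smult)
  have eig: "op a (wv p q r t) = L a \<cdot>\<^sub>v wv p q r t"
    if cls: "(L, p, q, r, t) \<in> {(lamI, 1/2, -1/2, 0, 0), (lam2, 1/4, 1/4, -1/2, 0),
        (lamT, 1/8, 1/8, 1/4, 1/2), (lamC, 1/8, 1/8, 1/4, -1/2)}" for L p q r t a
  proof -
    have "a mod 8 < 8" by simp
    then have cases: "a mod 8 = 0 \<or> a mod 8 = 1 \<or> a mod 8 = 2 \<or> a mod 8 = 3 \<or> a mod 8 = 4 \<or>
       a mod 8 = 5 \<or> a mod 8 = 6 \<or> a mod 8 = 7" by presburger
    have Lm: "L a = L (a mod 8)" using cls by (elim insertE; simp add: lamI_def lam2_def lamT_def lamC_def mod_mod_cancel even_mod8)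
    have main: "op r (wv p q s t) = L r \<cdot>\<^sub>v wv p q s t"
      if r: "r = 0 \<or> r = 1 \<or> r = 2 \<or> r = 3 \<or> r = 4 \<or> r = 5 \<or> r = 6 \<or> r = (7::nat)"
      and c: "(L, p, q, s, t) \<in> {(lamI, 1/2, -1/2, 0, 0), (lam2, 1/4, 1/4, -1/2, 0),
        (lamT, 1/8, 1/8, 1/4, 1/2), (lamC, 1/8, 1/8, 1/4, -1/2)}" for r p q s t
    proof -
      have "(L = lamI \<and> p = 1/2 \<and> q = -1/2 \<and> s = 0 \<and> t = 0) \<or> (L = lam2 \<and> p = 1/4 \<and> q = 1/4 \<and> s = -1/2 \<and> t = 0) \<or>
        (L = lamT \<and> p = 1/8 \<and> q = 1/8 \<and> s = 1/4 \<and> t = 1/2) \<or> (L = lamC \<and> p = 1/8 \<and> q = 1/8 \<and> s = 1/4 \<and> t = -1/2)"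
        using c by auto
      then show ?thesis using r
        by (elim disjE conjE; hypsubst; simp only: opwv opx X_wv wv_add wv_smult;
          simp add: e0_def e4_def e2_def e1_def lamI_def lam2_def lamT_def lamC_def)
    qed
    have "op a (wv p q r t) = op (a mod 8) (wv p q r t)" by (simp add: op_mod)
    also have "\<dots> = L (a mod 8) \<cdot>\<^sub>v wv p q r t" by (rule main[OF cases cls])
    finally show ?thesis using Lm by simp
  qed
  have sum: "wv (1/2) (-1/2) 0 0 + wv (1/4) (1/4) (-1/2) 0 + wv (1/8) (1/8) (1/4) (1/2) + wv (1/8) (1/8) (1/4) (-1/2) = v"
    unfolding X0[symmetric] x0_def[symmetric] by (intro eq_vecI) (simp_all add: wv_def algebra_simps)
  have fixw: "wv p q r t \<in> fixed_space n \<rho> U1" for p q r t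
  proof -
    have "P1 (X c) = X c" for c unfolding X_def using fix1_P P1_fix vc by (simp add: Gaff_iff)
    then have "P1 x0 = x0" "P1 x4 = x4" "P1 x2 = x2" "P1 x1 = x1" unfolding x0_def x4_def x2_def x1_def by auto
    then have "P1 (wv p q r t) = wv p q r t" unfolding wv_def by (simp add: P1_add P1_smult)
    then show ?thesis using fix1_P by simp
  qed
  have "\<exists>p q r t L. wv p q r t \<noteq> 0\<^sub>v n \<and> (L, p, q, r, t) \<in> {(lamI, 1/2, -1/2, 0, 0), (lam2, 1/4, 1/4, -1/2, 0),
        (lamT, 1/8, 1/8, 1/4, 1/2), (lamC, 1/8, 1/8, 1/4, -1/2)}"
  proof (rule ccontr)
    assume "\<not> ?thesis"
    then have "wv (1/2) (-1/2) 0 0 = 0\<^sub>v n" "wv (1/4) (1/4) (-1/2) 0 = 0\<^sub>v n"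
      "wv (1/8) (1/8) (1/4) (1/2) = 0\<^sub>v n" "wv (1/8) (1/8) (1/4) (-1/2) = 0\<^sub>v n" by blast+
    then have "v = 0\<^sub>v n" using sum by simp
    then show False using v0 by simp
  qed
  then obtain p q r t L where nz: "wv p q r t \<noteq> 0\<^sub>v n" and cls: "(L, p, q, r, t) \<in> {(lamI, 1/2, -1/2, 0, 0), (lam2, 1/4, 1/4, -1/2, 0),
        (lamT, 1/8, 1/8, 1/4, 1/2), (lamC, 1/8, 1/8, 1/4, -1/2)}" by blast
  have "L \<in> {lamI, lam2, lamT, lamC}" using cls by auto
  then show ?thesis using nz fixw eig[OF cls] by blast
qed

end


context irr begin

definition pr :: "rat vec \<Rightarrow> rat vec \<Rightarrow> rat" where "pr x y = x \<bullet> (B *\<^sub>v y)"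

lemma Bv_car[simp]: "y \<in> carrier_vec n \<Longrightarrow> B *\<^sub>v y \<in> carrier_vec n"
  using B_car by (metis mult_mat_vec_carrier)

lemma pr_add_r: "x \<in> carrier_vec n \<Longrightarrow> y \<in> carrier_vec n \<Longrightarrow> z \<in> carrier_vec n \<Longrightarrow>
  pr x (y + z) = pr x y + pr x z"
  unfolding pr_def by (simp add: mult_add_distrib_mat_vec[OF B_car] scalar_prod_add_distrib[of _ n])
lemma pr_smult_r: "x \<in> carrier_vec n \<Longrightarrow> y \<in> carrier_vec n \<Longrightarrow> pr x (k \<cdot>\<^sub>v y) = k * pr x y"
  unfolding pr_def by (simp add: mult_mat_vec[OF B_car])
lemma pr_add_l: "x \<in> carrier_vec n \<Longrightarrow> y \<in> carrier_vec n \<Longrightarrow> z \<in> carrier_vec n \<Longrightarrow>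
  pr (x + y) z = pr x z + pr y z"
  unfolding pr_def by (simp add: add_scalar_prod_distrib[of _ n])
lemma pr_smult_l: "x \<in> carrier_vec n \<Longrightarrow> y \<in> carrier_vec n \<Longrightarrow> pr (k \<cdot>\<^sub>v x) y = k * pr x y"
  unfolding pr_def by simp
lemma dimB[simp]: "dim_row B = n" "dim_col B = n" using B_car by (metis carrier_matD(1), metis carrier_matD(2))
lemma B_zero: "B *\<^sub>v 0\<^sub>v n = 0\<^sub>v n" by (intro eq_vecI) (auto simp: scalar_prod_def)
lemma pr_zero_r: "x \<in> carrier_vec n \<Longrightarrow> pr x (0\<^sub>v n) = 0"
  unfolding pr_def B_zero by simp

lemma pr_inv: assumes g: "g \<in> Gaff" and x: "x \<in> carrier_vec n" and y: "y \<in> carrier_vec n"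
  shows "pr (\<rho> g *\<^sub>v x) (\<rho> g *\<^sub>v y) = pr x y"
proof -
  let ?A = "\<rho> g"
  have A: "?A \<in> carrier_mat n n" using g by simp
  have z: "B *\<^sub>v (?A *\<^sub>v y) \<in> carrier_vec n" using A y by simp
  have "(?A *\<^sub>v x) \<bullet> (B *\<^sub>v (?A *\<^sub>v y)) = (B *\<^sub>v (?A *\<^sub>v y)) \<bullet> (?A *\<^sub>v x)"
    by (rule comm_scalar_prod[of _ n]) (use A x z in auto)
  also have "\<dots> = (transpose_mat ?A *\<^sub>v (B *\<^sub>v (?A *\<^sub>v y))) \<bullet> x"
    by (rule transpose_vec_mult_scalar[symmetric, OF A x z])
  also have "transpose_mat ?A *\<^sub>v (B *\<^sub>v (?A *\<^sub>v y)) = (transpose_mat ?A * B * ?A) *\<^sub>v y"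
    using A y by (simp add: assoc_mult_mat_vec[of _ n n _ n])
  also have "\<dots> = B *\<^sub>v y" using Binv[OF g] by simp
  also have "(B *\<^sub>v y) \<bullet> x = x \<bullet> (B *\<^sub>v y)" by (rule comm_scalar_prod[of _ n]) (use x y in auto)
  finally show ?thesis unfolding pr_def .
qed

lemma pr_fix1: assumes w: "w \<in> fixed_space n \<rho> U1" and y: "y \<in> carrier_vec n"
  shows "pr w (P1 y) = pr w y"
proof -
  have wc: "w \<in> carrier_vec n" using w unfolding fix1_iff by auto
  have e: "pr w (\<rho> (a,0) *\<^sub>v y) = pr w y" if "a = 3 \<or> a = 5 \<or> a = 7" for a
  proof -
    have "\<rho> (a,0) *\<^sub>v w = w" using w that unfolding fix1_iff by auto
    then have "pr w (\<rho> (a,0) *\<^sub>v y) = pr (\<rho> (a,0) *\<^sub>v w) (\<rho> (a,0) *\<^sub>v y)" by simp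
    also have "\<dots> = pr w y" by (rule pr_inv) (use that wc y in \<open>auto simp: Gaff_iff\<close>)
    finally show ?thesis .
  qed
  show ?thesis unfolding P1_def using wc y e[of 3] e[of 5] e[of 7]
    by (simp add: pr_smult_r pr_add_r Gaff_iff)
qed

lemma pr_fix2: assumes w: "w \<in> fixed_space n \<rho> U2" and y: "y \<in> carrier_vec n"
  shows "pr w (P2 y) = pr w y" "pr (P2 y) w = pr y w"
proof -
  have wc: "w \<in> carrier_vec n" using w unfolding fix2_iff by auto
  have e: "pr w (\<rho> g *\<^sub>v y) = pr w y" "pr (\<rho> g *\<^sub>v y) w = pr y w" if "g = (7,0) \<or> g = (3,4) \<or> g = (5,4)" for g
  proof -
    have f: "\<rho> g *\<^sub>v w = w" using w that unfolding fix2_iff by auto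
    have g: "g \<in> Gaff" using that by (auto simp: Gaff_iff)
    have "pr w (\<rho> g *\<^sub>v y) = pr (\<rho> g *\<^sub>v w) (\<rho> g *\<^sub>v y)" using f by simp
    also have "\<dots> = pr w y" by (rule pr_inv) (use g wc y in auto)
    finally show "pr w (\<rho> g *\<^sub>v y) = pr w y" .
    have "pr (\<rho> g *\<^sub>v y) w = pr (\<rho> g *\<^sub>v y) (\<rho> g *\<^sub>v w)" using f by simp
    also have "\<dots> = pr y w" by (rule pr_inv) (use g wc y in auto)
    finally show "pr (\<rho> g *\<^sub>v y) w = pr y w" .
  qed
  show "pr w (P2 y) = pr w y" unfolding P2_def using wc y e[of "(7,0)"] e[of "(3,4)"] e[of "(5,4)"]
    by (simp add: pr_smult_r pr_add_r Gaff_iff)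
  show "pr (P2 y) w = pr y w" unfolding P2_def using wc y e[of "(7,0)"] e[of "(3,4)"] e[of "(5,4)"]
    by (simp add: pr_smult_l pr_add_l Gaff_iff)
qed

lemma P1_idem: "y \<in> carrier_vec n \<Longrightarrow> P1 (P1 y) = P1 y"
  using P1_fix fix1_P by blast
lemma P2_idem: "y \<in> carrier_vec n \<Longrightarrow> P2 (P2 y) = P2 y"
  using P2_fix fix2_P by blast

end

locale cls = irr +
  fixes w :: "rat vec" and L :: "nat \<Rightarrow> rat"
  assumes w: "w \<in> fixed_space n \<rho> U1" and w0: "w \<noteq> 0\<^sub>v n"
    and L: "L \<in> {lamI, lam2, lamT, lamC}" and eig: "\<And>a. op a w = L a \<cdot>\<^sub>v w"
begin

lemma wc[simp]: "w \<in> carrier_vec n" using w unfolding fix1_iff by auto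

lemma L_mod: "L (k mod 8) = L k"
  using L by (auto simp: lamI_def lam2_def lamT_def lamC_def mod_mod_cancel even_mod8)
lemma L_cong: "x mod 8 = y mod 8 \<Longrightarrow> L x = L y"
  by (metis L_mod)
lemma L0: "L 0 = 1" using L by (auto simp: lamI_def lam2_def lamT_def lamC_def)

definition u :: "nat \<Rightarrow> rat vec" where "u b = \<rho> (1, b mod 8) *\<^sub>v w"

lemma u_car[simp]: "u b \<in> carrier_vec n" unfolding u_def by (simp add: Gaff_iff)
lemma u0: "u 0 = w" unfolding u_def by simp
lemma u_cong: "a mod 8 = b mod 8 \<Longrightarrow> u a = u b" unfolding u_def by simp

lemma rho_u: assumes g: "(a,c) \<in> Gaff" shows "\<rho> (a,c) *\<^sub>v u b = u (a * b + c)"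
proof -
  have a: "a = 1 \<or> a = 3 \<or> a = 5 \<or> a = 7" and c: "c < 8" using g by (auto simp: Gaff_iff)
  have am: "a mod 8 = a" using a by auto
  have "\<rho> (a,c) *\<^sub>v u b = \<rho> (a, (a * (b mod 8) + c) mod 8) *\<^sub>v w"
    unfolding u_def using g am by (simp add: Gaff_iff)
  also have "\<dots> = \<rho> (1, (a * (b mod 8) + c) mod 8) *\<^sub>v w" by (rule fix_unit[OF w a]) simp
  also have "(a * (b mod 8) + c) mod 8 = (a * b + c) mod 8" by (metis mod_add_left_eq mod_mult_right_eq)
  finally show ?thesis unfolding u_def .
qed

definition lcl :: "(rat \<times> nat) list \<Rightarrow> rat vec" where
  "lcl xs = foldr (\<lambda>(k,b) acc. k \<cdot>\<^sub>v u b + acc) xs (0\<^sub>v n)"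

lemma lcl_Nil[simp]: "lcl [] = 0\<^sub>v n" unfolding lcl_def by simp
lemma lcl_Cons[simp]: "lcl ((k,b) # xs) = k \<cdot>\<^sub>v u b + lcl xs" unfolding lcl_def by simp
lemma lcl_car[simp]: "lcl xs \<in> carrier_vec n" by (induction xs) auto

lemma lcl_append: "lcl (xs @ ys) = lcl xs + lcl ys"
proof (induction xs)
  case Nil then show ?case by simp
next
  case (Cons p xs) then show ?case
    by (cases p) (simp add: assoc_add_vec[of _ n])
qed

lemma lcl_smult: "c \<cdot>\<^sub>v lcl xs = lcl (map (\<lambda>(k,b). (c * k, b)) xs)"
proof (induction xs)
  case Nil then show ?case by (intro eq_vecI) auto
next
  case (Cons p xs) then show ?case
    by (cases p) (simp add: smult_add_distrib_vec[of _ n] smult_smult_assoc)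
qed

lemma rho_lcl: assumes g: "g \<in> Gaff" shows "\<rho> g *\<^sub>v lcl xs = lcl (map (\<lambda>(k,b). (k, fst g * b + snd g)) xs)"
proof (induction xs)
  case Nil then show ?case using g by simp
next
  case (Cons p xs)
  obtain k b where p: "p = (k,b)" by force
  obtain a c where gg: "g = (a,c)" by force
  show ?case using Cons g rho_u[of a c b] unfolding p gg by simp
qed

lemma span: assumes x: "x \<in> carrier_vec n" shows "\<exists>xs. x = lcl xs"
proof -
  let ?W = "{lcl xs | xs. True}"
  have sub: "is_subspace n ?W" unfolding is_subspace_def
  proof (intro conjI ballI allI)
    show "?W \<subseteq> carrier_vec n" by auto
    show "0\<^sub>v n \<in> ?W" using lcl_Nil by (metis (mono_tags, lifting) mem_Collect_eq)
    fix v v' assume "v \<in> ?W" "v' \<in> ?W"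
    then obtain xs ys where "v = lcl xs" "v' = lcl ys" by auto
    then have "v + v' = lcl (xs @ ys)" by (simp add: lcl_append)
    then show "v + v' \<in> ?W" by auto
  next
    fix c v assume "v \<in> ?W"
    then obtain xs where "v = lcl xs" by auto
    then have "c \<cdot>\<^sub>v v = lcl (map (\<lambda>(k,b). (c * k, b)) xs)" by (simp add: lcl_smult)
    then show "c \<cdot>\<^sub>v v \<in> ?W" by auto
  qed
  have inv: "\<forall>g\<in>Gaff. \<forall>v\<in>?W. \<rho> g *\<^sub>v v \<in> ?W"
  proof (intro ballI)
    fix g v assume g: "g \<in> Gaff" and "v \<in> ?W"
    then obtain xs where "v = lcl xs" by auto
    then show "\<rho> g *\<^sub>v v \<in> ?W" using rho_lcl[OF g] by auto
  qed
  have "?W = {0\<^sub>v n} \<or> ?W = carrier_vec n" using irr sub inv unfolding irreducible_rep_def by blast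
  moreover have "w \<in> ?W"
  proof -
    have "lcl [(1,0)] = w" using u0 by simp
    then show ?thesis by (metis (mono_tags, lifting) mem_Collect_eq)
  qed
  ultimately have "?W = carrier_vec n" using w0 by auto
  then show ?thesis using x by auto
qed

abbreviation "N \<equiv> pr w w"

lemma op_u: "op k w = P1 (u k)" unfolding op_def u_def by simp

lemma gram: "pr (u a) (u b) = L (b + 7 * a) * N"
proof -
  have g: "(1, (7 * a) mod 8) \<in> Gaff" by (simp add: Gaff_iff)
  have "pr (u a) (u b) = pr (\<rho> (1, (7 * a) mod 8) *\<^sub>v u a) (\<rho> (1, (7 * a) mod 8) *\<^sub>v u b)"
    by (rule pr_inv[symmetric]) (use g in auto)
  also have "\<rho> (1, (7 * a) mod 8) *\<^sub>v u a = u 0"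
    unfolding rho_u[OF g] by (rule u_cong) presburger
  also have "\<rho> (1, (7 * a) mod 8) *\<^sub>v u b = u (b + 7 * a)"
    unfolding rho_u[OF g] by (rule u_cong) presburger
  also have "pr (u 0) (u (b + 7 * a)) = pr w (P1 (u (b + 7 * a)))" unfolding u0 by (rule pr_fix1[OF w, symmetric]) simp
  also have "\<dots> = L (b + 7 * a) * N" unfolding op_u[symmetric] eig by (simp add: pr_smult_r)
  finally show ?thesis .
qed

lemma pr_lcl: "z \<in> carrier_vec n \<Longrightarrow> pr (lcl xs) z = sum_list (map (\<lambda>(k,b). k * pr (u b) z) xs)"
proof (induction xs)
  case Nil then show ?case unfolding pr_def by simp
next
  case (Cons p xs) then show ?case by (cases p) (simp add: pr_add_l pr_smult_l)
qed

lemma crit: assumes z: "z \<in> carrier_vec n" and h: "\<And>a. a < 8 \<Longrightarrow> pr (u a) z = 0" shows "z = 0\<^sub>v n"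
proof -
  have h': "pr (u b) z = 0" for b
  proof -
    have "u b = u (b mod 8)" by (rule u_cong) simp
    then show ?thesis using h[of "b mod 8"] by simp
  qed
  have all: "pr x z = 0" if xc: "x \<in> carrier_vec n" for x
  proof -
    obtain xs where "x = lcl xs" using span[OF xc] by auto
    moreover have "sum_list (map (\<lambda>(k,b). k * pr (u b) z) ys) = 0" for ys
      using h' by (induction ys) auto
    ultimately show ?thesis using pr_lcl[OF z] by simp
  qed
  have Bz: "B *\<^sub>v z = 0\<^sub>v n"
  proof (rule eq_vecI)
    fix i assume "i < dim_vec (0\<^sub>v n :: rat vec)"
    then have i: "i < n" by simp
    have "(B *\<^sub>v z) $ i = unit_vec n i \<bullet> (B *\<^sub>v z)" using i z by simp
    also have "\<dots> = 0" using all[of "unit_vec n i"] unfolding pr_def by simp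
    finally show "(B *\<^sub>v z) $ i = (0\<^sub>v n :: rat vec) $ i" using i by simp
  qed (use z in simp)
  show ?thesis using det_0_iff_vec_prod_zero[OF B_car] detB Bz z by blast
qed

lemma N0: "N \<noteq> 0"
proof
  assume N: "N = 0"
  have "pr (u a) w = 0" for a using gram[of a 0] N unfolding u0 by simp
  then have "w = 0\<^sub>v n" by (intro crit) auto
  then show False using w0 by simp
qed

lemma P1_lcl: "P1 (lcl xs) = sum_list (map (\<lambda>(k,b). k * L b) xs) \<cdot>\<^sub>v w"
proof (induction xs)
  case Nil then show ?case unfolding P1_def by (intro eq_vecI) (auto simp: Gaff_iff)
next
  case (Cons p xs)
  obtain k b where p: "p = (k,b)" by force
  have "P1 (lcl (p # xs)) = k \<cdot>\<^sub>v P1 (u b) + P1 (lcl xs)" unfolding p by (simp add: P1_add P1_smult)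
  also have "P1 (u b) = L b \<cdot>\<^sub>v w" unfolding op_u[symmetric] eig ..
  finally show ?case unfolding p Cons by (intro eq_vecI) (auto simp: algebra_simps)
qed

lemma fix1_eq: "fixed_space n \<rho> U1 = {t \<cdot>\<^sub>v w | t. True}"
proof
  show "fixed_space n \<rho> U1 \<subseteq> {t \<cdot>\<^sub>v w | t. True}"
  proof
    fix x assume x: "x \<in> fixed_space n \<rho> U1"
    then have xc: "x \<in> carrier_vec n" and px: "P1 x = x" unfolding fix1_P by auto
    obtain xs where "x = lcl xs" using span[OF xc] by auto
    then have "x = sum_list (map (\<lambda>(k,b). k * L b) xs) \<cdot>\<^sub>v w" using px P1_lcl by simp
    then show "x \<in> {t \<cdot>\<^sub>v w | t. True}" by blast
  qed
  show "{t \<cdot>\<^sub>v w | t. True} \<subseteq> fixed_space n \<rho> U1"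
  proof
    fix x assume "x \<in> {t \<cdot>\<^sub>v w | t. True}"
    then obtain t where x: "x = t \<cdot>\<^sub>v w" by auto
    have "P1 w = w" using w fix1_P by auto
    then have "P1 x = x" unfolding x by (simp add: P1_smult)
    then show "x \<in> fixed_space n \<rho> U1" using fix1_P x by simp
  qed
qed

end


definition Hf :: "(nat \<Rightarrow> rat) \<Rightarrow> nat \<Rightarrow> nat \<Rightarrow> rat" where
  "Hf L a b = (1/4) * (L (b + 7*a) + L (7*b + 7*a) + L (3*b + 4 + 7*a) + L (5*b + 4 + 7*a))"

lemma all8: "(\<forall>a<(8::nat). P a) \<longleftrightarrow> (P 0 \<and> P 1 \<and> P 2 \<and> P 3 \<and> P 4 \<and> P 5 \<and> P 6 \<and> P 7)"
proof
  assume "P 0 \<and> P 1 \<and> P 2 \<and> P 3 \<and> P 4 \<and> P 5 \<and> P 6 \<and> P 7"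
  moreover have "a < 8 \<Longrightarrow> a = 0 \<or> a = 1 \<or> a = 2 \<or> a = 3 \<or> a = 4 \<or> a = 5 \<or> a = 6 \<or> a = (7::nat)" for a
    by presburger
  ultimately show "\<forall>a<(8::nat). P a" by auto
qed auto

lemma rankI: "\<forall>a<8. \<forall>b<8. Hf lamI a b * Hf lamI 1 1 = Hf lamI 1 b * Hf lamI a 1"
  unfolding all8 by (simp add: Hf_def lamI_def)
lemma HI: "Hf lamI 1 1 = 1/2" by (simp add: Hf_def lamI_def)
lemma rank2: "\<forall>a<8. \<forall>b<8. Hf lam2 a b * Hf lam2 0 0 = Hf lam2 0 b * Hf lam2 a 0"
  unfolding all8 by (simp add: Hf_def lam2_def)
lemma H2: "Hf lam2 0 0 = 1" by (simp add: Hf_def lam2_def)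
lemma rankT: "\<forall>a<8. \<forall>b<8. Hf lamT a b * Hf lamT 0 0 = Hf lamT 0 b * Hf lamT a 0"
  unfolding all8 by (simp add: Hf_def lamT_def)
lemma HT: "Hf lamT 0 0 = 1" by (simp add: Hf_def lamT_def)
lemma rankC: "\<forall>a<8. \<forall>b<8. Hf lamC a b * Hf lamC 0 0 = Hf lamC 0 b * Hf lamC a 0"
  unfolding all8 by (simp add: Hf_def lamC_def)
lemma HC: "Hf lamC 0 0 = 1" by (simp add: Hf_def lamC_def)

context cls begin

abbreviation "H \<equiv> Hf L"

lemma P2u: "P2 (u b) = (1/4) \<cdot>\<^sub>v (u b + u (7*b) + u (3*b+4) + u (5*b+4))"
  unfolding P2_def using rho_u[of 7 0 b] rho_u[of 3 4 b] rho_u[of 5 4 b] by (simp add: Gaff_iff)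

lemma prP2u: "pr (u a) (P2 (u b)) = H a b * N"
  unfolding P2u Hf_def by (simp add: pr_smult_r pr_add_r gram algebra_simps)

lemma modlem: "(c * (b mod 8) + d) mod 8 = (c * b + d) mod (8::nat)"
  by (metis mod_add_left_eq mod_mult_right_eq)

lemma H_mod: "H a b = H a (b mod 8)"
proof -
  have "L (b + 7*a) = L (b mod 8 + 7*a)" by (rule L_cong) (simp add: mod_simps)
  moreover have "L (7*b + 7*a) = L (7*(b mod 8) + 7*a)" by (rule L_cong) (metis mod_add_left_eq mod_mult_right_eq)
  moreover have "L (3*b + 4 + 7*a) = L (3*(b mod 8) + 4 + 7*a)"
    by (rule L_cong) (use modlem[of 3 b "4 + 7*a"] in \<open>simp add: add.assoc\<close>)
  moreover have "L (5*b + 4 + 7*a) = L (5*(b mod 8) + 4 + 7*a)"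
    by (rule L_cong) (use modlem[of 5 b "4 + 7*a"] in \<open>simp add: add.assoc\<close>)
  ultimately show ?thesis unfolding Hf_def by simp
qed

lemma P2_lcl_pr: "pr (u a) (P2 (lcl xs)) = sum_list (map (\<lambda>(k,b). k * H a b) xs) * N"
proof (induction xs)
  case Nil
  have "P2 (0\<^sub>v n) = 0\<^sub>v n" unfolding P2_def by (intro eq_vecI) (auto simp: Gaff_iff)
  then show ?case by (simp add: pr_zero_r)
next
  case (Cons p xs)
  obtain k b where p: "p = (k,b)" by force
  show ?case unfolding p using Cons
    by (simp add: P2_add P2_smult pr_add_r pr_smult_r prP2u algebra_simps)
qed

lemma fix2_eq: assumes rank: "\<forall>a<8. \<forall>b<8. H a b * H b0 b0 = H b0 b * H a b0" and Hb: "H b0 b0 \<noteq> 0"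
  and b0: "b0 < 8"
  shows "fixed_space n \<rho> U2 = {t \<cdot>\<^sub>v P2 (u b0) | t. True}"
    "pr (P2 (u b0)) (P2 (u b0)) = H b0 b0 * N"
proof -
  let ?y = "P2 (u b0)"
  have yc: "?y \<in> carrier_vec n" by simp
  have yfix: "?y \<in> fixed_space n \<rho> U2" by (rule P2_fix) simp
  have rk: "H a b * H b0 b0 = H b0 b * H a b0" if a: "a < 8" for a b
    using rank a b0 H_mod[of a b] H_mod[of b0 b] by (metis mod_less_divisor zero_less_numeral)
  define sH where "sH a xs = sum_list (map (\<lambda>(k,b). k * H a b) xs)" for a xs
  have sHid: "sH a xs * H b0 b0 = sH b0 xs * H a b0" if a: "a < 8" for a xs
  proof (induction xs)
    case Nil then show ?case unfolding sH_def by simp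
  next
    case (Cons p xs)
    obtain k b where p: "p = (k,b)" by force
    have "sH a (p # xs) * H b0 b0 = k * (H a b * H b0 b0) + sH a xs * H b0 b0"
      unfolding p sH_def by (simp add: algebra_simps)
    also have "\<dots> = k * (H b0 b * H a b0) + sH b0 xs * H a b0" using rk[OF a] Cons by simp
    also have "\<dots> = sH b0 (p # xs) * H a b0" unfolding p sH_def by (simp add: algebra_simps)
    finally show ?case .
  qed
  show "fixed_space n \<rho> U2 = {t \<cdot>\<^sub>v ?y | t. True}"
  proof
    show "fixed_space n \<rho> U2 \<subseteq> {t \<cdot>\<^sub>v ?y | t. True}"
    proof
      fix x assume x: "x \<in> fixed_space n \<rho> U2"
      then have xc: "x \<in> carrier_vec n" and px: "P2 x = x" unfolding fix2_P by auto
      obtain xs where xs: "x = lcl xs" using span[OF xc] by auto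
      define t where "t = sH b0 xs / H b0 b0"
      define z where "z = x + (- t) \<cdot>\<^sub>v ?y"
      have zc: "z \<in> carrier_vec n" unfolding z_def using xc by simp
      have "pr (u a) z = 0" if a: "a < 8" for a
      proof -
        have "pr (u a) z = pr (u a) (P2 (lcl xs)) + (- t) * pr (u a) ?y"
          unfolding z_def using xc px xs by (simp add: pr_add_r pr_smult_r)
        also have "\<dots> = sH a xs * N - t * (H a b0 * N)"
          unfolding P2_lcl_pr prP2u sH_def by simp
        also have "\<dots> = N * (sH a xs * H b0 b0 - sH b0 xs * H a b0) / H b0 b0"
          unfolding t_def using Hb by (simp add: field_simps)
        also have "\<dots> = 0" using sHid[OF a] by simp
        finally show ?thesis .
      qed
      then have "z = 0\<^sub>v n" by (intro crit[OF zc]) auto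
      then have z0: "z = 0\<^sub>v n" .
      have "x = t \<cdot>\<^sub>v ?y"
      proof (rule eq_vecI)
        fix i assume "i < dim_vec (t \<cdot>\<^sub>v ?y)"
        then have i: "i < n" by simp
        have "z $ i = 0" using z0 i by simp
        then show "x $ i = (t \<cdot>\<^sub>v ?y) $ i" unfolding z_def using xc i by simp
      qed (use xc in simp)
      then show "x \<in> {t \<cdot>\<^sub>v ?y | t. True}" by blast
    qed
    show "{t \<cdot>\<^sub>v ?y | t. True} \<subseteq> fixed_space n \<rho> U2"
    proof
      fix x assume "x \<in> {t \<cdot>\<^sub>v ?y | t. True}"
      then obtain t where x: "x = t \<cdot>\<^sub>v ?y" by auto
      have "P2 ?y = ?y" using yfix fix2_P by auto
      then have "P2 x = x" unfolding x by (simp add: P2_smult)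
      then show "x \<in> fixed_space n \<rho> U2" using fix2_P x by simp
    qed
  qed
  show "pr ?y ?y = H b0 b0 * N"
    using pr_fix2(2)[OF yfix, of "u b0"] prP2u[of b0 b0] by simp
qed

end


lemma mat_vec_unit: assumes A: "(A :: rat mat) \<in> carrier_mat nr nc" and m: "m < nc"
  shows "A *\<^sub>v unit_vec nc m = col A m"
proof (rule eq_vecI)
  fix i assume "i < dim_vec (col A m)"
  then have i: "i < nr" using A by simp
  have "row A i \<bullet> unit_vec nc m = row A i $ m" by (rule scalar_prod_right_unit[OF m])
  then show "(A *\<^sub>v unit_vec nc m) $ i = col A m $ i" using A m i by simp
qed (use A in simp)

lemma inv_carrier: assumes P: "P \<in> carrier_mat k k" and inv: "invertible_mat P"
  obtains P' where "P' \<in> carrier_mat k k" "P * P' = 1\<^sub>m k" "P' * P = 1\<^sub>m k"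
proof -
  obtain P' where PP': "inverts_mat P P'" and P'P: "inverts_mat P' P"
    using inv unfolding invertible_mat_def by blast
  have P': "P' \<in> carrier_mat k k" using PP' P'P P unfolding inverts_mat_def
    by (metis carrier_matD(1) carrier_matD(2) carrier_mat_triv index_mult_mat(3) index_one_mat(3))
  show ?thesis by (rule that[OF P']) (use PP' P'P P P' in \<open>auto simp: inverts_mat_def\<close>)
qed

lemma I_rep_14: "I_rep (1,4) = - 1\<^sub>m 4"
proof (rule eq_matI)
  fix i j assume i: "i < dim_row (- 1\<^sub>m 4 :: rat mat)" and j: "j < dim_col (- 1\<^sub>m 4 :: rat mat)"
  then have i4: "i < 4" and j4: "j < 4" by auto
  have "(4 + j) mod 8 = 4 + j" using j4 by simp
  then show "I_rep (1,4) $$ (i,j) = (- 1\<^sub>m 4 :: rat mat) $$ (i,j)"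
    using i4 j4 by (simp add: zeta_coord_def)
qed auto

lemma I_rep_car[simp]: "I_rep g \<in> carrier_mat 4 4"
  by (cases g) simp

lemma I_rep_a0: assumes "a < 8" shows "I_rep (a,0) *\<^sub>v unit_vec 4 0 = unit_vec 4 0"
proof -
  have "I_rep (a,0) *\<^sub>v unit_vec 4 0 = col (I_rep (a,0)) 0" by (rule mat_vec_unit) auto
  also have "\<dots> = zeta_coord 0" by (intro eq_vecI) (auto simp: zeta_coord_def)
  finally show ?thesis by (simp add: zeta_coord_def)
qed

definition mtr :: "rat mat \<Rightarrow> rat" where "mtr A = (\<Sum>i<dim_row A. A $$ (i,i))"

lemma mtr_comm: assumes A: "A \<in> carrier_mat p q" and B: "B \<in> carrier_mat q p"
  shows "mtr (A * B) = mtr (B * A)"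
proof -
  have "mtr (A * B) = (\<Sum>i<p. \<Sum>k<q. A $$ (i,k) * B $$ (k,i))"
    unfolding mtr_def using A B by (auto simp: scalar_prod_def lessThan_atLeast0 intro!: sum.cong)
  also have "\<dots> = (\<Sum>k<q. \<Sum>i<p. B $$ (k,i) * A $$ (i,k))"
    by (subst sum.swap) (simp add: mult.commute)
  also have "\<dots> = mtr (B * A)"
    unfolding mtr_def using A B by (auto simp: scalar_prod_def lessThan_atLeast0 intro!: sum.cong)
  finally show ?thesis .
qed

lemma mtr_one: "mtr (1\<^sub>m k) = of_nat k" unfolding mtr_def by simp

context cls begin

lemma rho14: "\<rho> (1,4) *\<^sub>v w = L 4 \<cdot>\<^sub>v w"
proof -
  have f: "\<rho> (a,0) *\<^sub>v (\<rho> (1,4) *\<^sub>v w) = \<rho> (1,4) *\<^sub>v w" if a: "a = 3 \<or> a = 5 \<or> a = 7" for a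
  proof -
    have "\<rho> (a,0) *\<^sub>v (\<rho> (1,4) *\<^sub>v w) = \<rho> (a,4) *\<^sub>v w" using a by (elim disjE) (simp_all add: Gaff_iff)
    also have "\<dots> = \<rho> (1,4) *\<^sub>v w" by (rule fix_unit[OF w]) (use a in auto)
    finally show ?thesis .
  qed
  have "\<rho> (1,4) *\<^sub>v w \<in> fixed_space n \<rho> U1" unfolding fix1_iff using f[of 3] f[of 5] f[of 7]
    by (simp add: Gaff_iff)
  then have "P1 (\<rho> (1,4) *\<^sub>v w) = \<rho> (1,4) *\<^sub>v w" using fix1_P by blast
  moreover have "P1 (\<rho> (1,4) *\<^sub>v w) = L 4 \<cdot>\<^sub>v w" using eig[of 4] unfolding op_def by simp
  ultimately show ?thesis by simp
qed

lemma u_shift: "u (b + 4) = L 4 \<cdot>\<^sub>v u b"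
proof -
  have "u (b + 4) = \<rho> (1, b mod 8) *\<^sub>v (\<rho> (1,4) *\<^sub>v w)"
    unfolding u_def by (simp add: Gaff_iff mod_simps add.commute)
  also have "\<dots> = L 4 \<cdot>\<^sub>v u b" unfolding rho14 u_def by (simp add: Gaff_iff)
  finally show ?thesis .
qed

lemma not_iso: assumes L4: "L 4 = 1" shows "\<not> iso_to_I n \<rho>"
proof
  assume "iso_to_I n \<rho>"
  then obtain P where n4: "n = 4" and P: "P \<in> carrier_mat 4 4" and inv: "invertible_mat P"
    and int: "\<forall>g\<in>Gaff. P * \<rho> g = I_rep g * P" unfolding iso_to_I_def by blast
  obtain P' where P': "P' \<in> carrier_mat 4 4" "P' * P = 1\<^sub>m 4" using inv_carrier[OF P inv] by metis
  have w4: "w \<in> carrier_vec 4" using wc n4 by simp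
  have r: "\<rho> (1,4) \<in> carrier_mat 4 4" using n4 car[of "(1,4)"] by (simp add: Gaff_iff)
  have "P *\<^sub>v w = P *\<^sub>v (\<rho> (1,4) *\<^sub>v w)" using rho14 L4 by simp
  also have "\<dots> = (P * \<rho> (1,4)) *\<^sub>v w" using P r w4 by simp
  also have "\<dots> = (- 1\<^sub>m 4 * P) *\<^sub>v w" using int I_rep_14 by (simp add: Gaff_iff)
  also have "\<dots> = - (P *\<^sub>v w)" using P w4 by (intro eq_vecI) auto
  finally have e: "P *\<^sub>v w = - (P *\<^sub>v w)" .
  have "P *\<^sub>v w = 0\<^sub>v 4"
  proof (rule eq_vecI)
    fix i assume "i < dim_vec (0\<^sub>v 4 :: rat vec)"
    then have i: "i < 4" by simp
    have "(P *\<^sub>v w) $ i = (- (P *\<^sub>v w)) $ i" using e by simp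
    then show "(P *\<^sub>v w) $ i = (0\<^sub>v 4 :: rat vec) $ i" using i P by simp
  qed (use P in simp)
  then have "w = P' *\<^sub>v (P *\<^sub>v w)" using P' P w4 by (metis assoc_mult_mat_vec one_mult_mat_vec)
  also have "\<dots> = 0\<^sub>v 4" using \<open>P *\<^sub>v w = 0\<^sub>v 4\<close> P' by (intro eq_vecI) (auto simp: scalar_prod_def)
  finally show False using w0 n4 by simp
qed

end

lemma not_iso_zero: assumes irr: "irr n \<rho> B" and A: "fixed_space n \<rho> U1 = {0\<^sub>v n}"
  shows "\<not> iso_to_I n \<rho>"
proof
  interpret irr n \<rho> B by (rule irr)
  assume "iso_to_I n \<rho>"
  then obtain P where n4: "n = 4" and P: "P \<in> carrier_mat 4 4" and inv: "invertible_mat P"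
    and int: "\<forall>g\<in>Gaff. P * \<rho> g = I_rep g * P" unfolding iso_to_I_def by blast
  obtain P' where P': "P' \<in> carrier_mat 4 4" "P * P' = 1\<^sub>m 4" "P' * P = 1\<^sub>m 4" using inv_carrier[OF P inv] by metis
  define x where "x = P' *\<^sub>v unit_vec 4 0"
  have xc: "x \<in> carrier_vec 4" unfolding x_def using P' by simp
  have fx: "\<rho> (a,0) *\<^sub>v x = x" if a: "a = 3 \<or> a = 5 \<or> a = 7" for a
  proof -
    have g: "(a,0) \<in> Gaff" using a by (auto simp: Gaff_iff)
    have r: "\<rho> (a,0) \<in> carrier_mat 4 4" using g n4 car[of "(a,0)"] by simp
    have "\<rho> (a,0) = P' * (P * \<rho> (a,0))" using P' P r by (metis assoc_mult_mat left_mult_one_mat)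
    also have "P * \<rho> (a,0) = I_rep (a,0) * P" using int g by blast
    finally have e: "\<rho> (a,0) = P' * (I_rep (a,0) * P)" .
    have c: "I_rep (a,0) * P \<in> carrier_mat 4 4" using P I_rep_car[of "(a,0)"] by (metis mult_carrier_mat)
    have "\<rho> (a,0) *\<^sub>v x = P' *\<^sub>v ((I_rep (a,0) * P) *\<^sub>v x)"
      unfolding e using P' c xc by simp
    also have "(I_rep (a,0) * P) *\<^sub>v x = I_rep (a,0) *\<^sub>v (P *\<^sub>v x)" by (rule assoc_mult_mat_vec[OF I_rep_car P xc])
    also have "P *\<^sub>v x = (P * P') *\<^sub>v unit_vec 4 0" unfolding x_def by (rule assoc_mult_mat_vec[symmetric, OF P P'(1) unit_vec_carrier])
    also have "\<dots> = unit_vec 4 0" using P'(2) by simp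
    finally have "\<rho> (a,0) *\<^sub>v x = P' *\<^sub>v (I_rep (a,0) *\<^sub>v unit_vec 4 0)" .
    also have "\<dots> = x" unfolding x_def using I_rep_a0 a by auto
    finally show ?thesis .
  qed
  have "x \<in> fixed_space n \<rho> U1" unfolding fix1_iff using xc n4 fx by auto
  then have "x = 0\<^sub>v 4" using A n4 by auto
  then have "P *\<^sub>v x = 0\<^sub>v 4" using P by (intro eq_vecI) (auto simp: scalar_prod_def)
  moreover have "P *\<^sub>v x = unit_vec 4 0" unfolding x_def using P P' by (metis assoc_mult_mat_vec one_mult_mat_vec unit_vec_carrier)
  ultimately show False by (metis unit_vec_nonzero zero_less_numeral)
qed



lemma sum4: "(\<Sum>j\<in>{0..<4::nat}. f j) = f 0 + f 1 + f 2 + (f 3 :: rat)"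
proof -
  have "{0..<4::nat} = {0,1,2,3}" by auto
  then show ?thesis by (simp add: algebra_simps)
qed

lemma lamI_delta: "m < 4 \<Longrightarrow> j < 4 \<Longrightarrow> lamI (j + 7 * m) = (if m = j then 1 else 0)"
proof -
  assume "m < 4" "j < 4"
  then have "m = 0 \<or> m = 1 \<or> m = 2 \<or> m = 3" "j = 0 \<or> j = 1 \<or> j = 2 \<or> j = (3::nat)" by presburger+
  then show ?thesis by (elim disjE; simp add: lamI_def)
qed

lemma I_dims[simp]: "dim_row (I_rep g) = 4" "dim_col (I_rep g) = 4" by (cases g, simp)+

context cls begin

lemma pr_lcl_r: "x \<in> carrier_vec n \<Longrightarrow> pr x (lcl xs) = sum_list (map (\<lambda>(k,b). k * pr x (u b)) xs)"
proof (induction xs)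
  case Nil then show ?case by (simp add: pr_zero_r)
next
  case (Cons p xs) then show ?case by (cases p) (simp add: pr_add_r pr_smult_r)
qed

lemma iso_I: assumes LI: "L = lamI" shows "iso_to_I n \<rho>"
proof -
  have L4: "L 4 = -1" unfolding LI lamI_def by simp
  have ush: "u (b + 4) = (-1) \<cdot>\<^sub>v u b" for b using u_shift L4 by simp
  have pru: "pr (u (b + 4)) x = - pr (u b) x" if "x \<in> carrier_vec n" for b x
    unfolding ush using that by (simp add: pr_smult_l)
  define Q where "Q = mat n 4 (\<lambda>(i,j). u j $ i)"
  have Qc: "Q \<in> carrier_mat n 4" unfolding Q_def by simp
  have colQ: "col Q j = u j" if "j < 4" for j unfolding Q_def using that by (intro eq_vecI) auto
  define Lm where "Lm = mat 4 n (\<lambda>(m,i). (transpose_mat B *\<^sub>v u m) $ i / N)"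
  have Lmc: "Lm \<in> carrier_mat 4 n" unfolding Lm_def by simp
  have Lm_ap: "(Lm *\<^sub>v x) $ m = pr (u m) x / N" if x: "x \<in> carrier_vec n" and m: "m < 4" for x m
  proof -
    have "(Lm *\<^sub>v x) $ m = (\<Sum>i\<in>{0..<n}. (transpose_mat B *\<^sub>v u m) $ i / N * x $ i)"
      unfolding Lm_def using m x by (simp add: scalar_prod_def)
    also have "\<dots> = ((transpose_mat B *\<^sub>v u m) \<bullet> x) / N"
      unfolding scalar_prod_def using x by (simp add: sum_divide_distrib)
    also have "(transpose_mat B *\<^sub>v u m) \<bullet> x = pr (u m) x"
      unfolding pr_def by (rule transpose_vec_mult_scalar[OF B_car x u_car])
    finally show ?thesis .
  qed
  have Q_ap: "Q *\<^sub>v y = lcl [(y $ 0, 0), (y $ 1, 1), (y $ 2, 2), (y $ 3, 3)]" if y: "y \<in> carrier_vec 4" for y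
  proof (rule eq_vecI)
    fix i assume "i < dim_vec (lcl [(y $ 0, 0), (y $ 1, 1), (y $ 2, 2), (y $ 3, 3)])"
    then have i: "i < n" by simp
    have "(Q *\<^sub>v y) $ i = (\<Sum>j\<in>{0..<4}. u j $ i * y $ j)"
      unfolding Q_def using i y by (simp add: scalar_prod_def)
    then show "(Q *\<^sub>v y) $ i = lcl [(y $ 0, 0), (y $ 1, 1), (y $ 2, 2), (y $ 3, 3)] $ i"
      using i by (simp add: sum4 algebra_simps)
  qed (use Qc in simp)
  have LQ: "Lm * Q = 1\<^sub>m 4"
  proof (rule eq_matI)
    fix m j assume "m < dim_row (1\<^sub>m 4 :: rat mat)" "j < dim_col (1\<^sub>m 4 :: rat mat)"
    then have m: "m < 4" and j: "j < 4" by auto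
    have "(Lm * Q) $$ (m,j) = (Lm *\<^sub>v col Q j) $ m" using Lmc Qc m j by simp
    also have "\<dots> = pr (u m) (u j) / N" unfolding colQ[OF j] by (rule Lm_ap) (use m in auto)
    also have "\<dots> = (if m = j then 1 else 0)" unfolding gram LI using lamI_delta[OF m j] N0 by simp
    finally show "(Lm * Q) $$ (m,j) = (1\<^sub>m 4 :: rat mat) $$ (m,j)" using m j by simp
  qed (use Lmc Qc in auto)
  have QLx: "Q *\<^sub>v (Lm *\<^sub>v x) = x" if x: "x \<in> carrier_vec n" for x
  proof -
    define y where "y = Lm *\<^sub>v x"
    have yc: "y \<in> carrier_vec 4" unfolding y_def using Lmc x by simp
    have yv: "y $ m = pr (u m) x / N" if "m < 4" for m unfolding y_def using Lm_ap[OF x that] .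
    define z where "z = Q *\<^sub>v y + (-1) \<cdot>\<^sub>v x"
    have zc: "z \<in> carrier_vec n" unfolding z_def using Qc yc x by simp
    have prz: "pr (u a) z = (\<Sum>m<4. pr (u m) x * L (m + 7 * a)) - pr (u a) x" for a
    proof -
      have "pr (u a) z = pr (u a) (Q *\<^sub>v y) - pr (u a) x"
        unfolding z_def using Qc yc x by (simp add: pr_add_r pr_smult_r)
      also have "pr (u a) (Q *\<^sub>v y) = (\<Sum>m<4. y $ m * pr (u a) (u m))"
        unfolding Q_ap[OF yc] pr_lcl_r[OF u_car] by (simp add: lessThan_atLeast0 sum4 algebra_simps)
      also have "\<dots> = (\<Sum>m<4. pr (u m) x * L (m + 7 * a))"
        by (rule sum.cong) (use N0 in \<open>auto simp: yv gram\<close>)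
      finally show ?thesis .
    qed
    have "pr (u a) z = 0" if a: "a < 8" for a
    proof -
      have "a = 0 \<or> a = 1 \<or> a = 2 \<or> a = 3 \<or> a = 4 \<or> a = 5 \<or> a = 6 \<or> a = 7" using a by presburger
      then show ?thesis unfolding prz LI
        using pru[where b=0 and x=x] pru[where b=1 and x=x] pru[where b=2 and x=x] pru[where b=3 and x=x] x
        by (elim disjE; simp add: lessThan_atLeast0 sum4 lamI_def)
    qed
    then have "z = 0\<^sub>v n" by (intro crit[OF zc]) auto
    then have z0: "z = 0\<^sub>v n" .
    show ?thesis
    proof (rule eq_vecI)
      fix i assume "i < dim_vec x"
      then have i: "i < n" using x by simp
      have "z $ i = 0" using z0 i by simp
      then show "(Q *\<^sub>v (Lm *\<^sub>v x)) $ i = x $ i" unfolding z_def y_def using Qc Lmc x i by simp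
    qed (use Qc x in simp)
  qed
  have QL: "Q * Lm = 1\<^sub>m n"
  proof (rule eq_matI)
    fix i j assume "i < dim_row (1\<^sub>m n :: rat mat)" "j < dim_col (1\<^sub>m n :: rat mat)"
    then have i: "i < n" and j: "j < n" by auto
    have "(Q * Lm) $$ (i,j) = ((Q * Lm) *\<^sub>v unit_vec n j) $ i"
    proof -
      have "((Q * Lm) *\<^sub>v unit_vec n j) = col (Q * Lm) j"
        by (rule mat_vec_unit[of _ n n]) (use Qc Lmc j in auto)
      then show ?thesis using Qc Lmc i j by simp
    qed
    also have "(Q * Lm) *\<^sub>v unit_vec n j = unit_vec n j"
      using QLx[of "unit_vec n j"] Qc Lmc by simp
    finally show "(Q * Lm) $$ (i,j) = (1\<^sub>m n :: rat mat) $$ (i,j)" using i j by simp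
  qed (use Qc Lmc in auto)
  have "of_nat n = mtr (Q * Lm)" unfolding QL mtr_one ..
  also have "\<dots> = mtr (Lm * Q)" by (rule mtr_comm[OF Qc Lmc])
  also have "\<dots> = 4" unfolding LQ mtr_one by simp
  finally have n4: "n = 4" by simp
  have Q_zeta: "Q *\<^sub>v zeta_coord k = u k" for k
  proof (cases "k mod 8 < 4")
    case True
    then have "Q *\<^sub>v zeta_coord k = col Q (k mod 8)" unfolding zeta_coord_def
      by (simp add: mat_vec_unit[OF Qc])
    also have "\<dots> = u k" using True colQ u_cong[of "k mod 8" k] by simp
    finally show ?thesis .
  next
    case False
    define m where "m = k mod 8 - 4"
    have m: "m < 4" unfolding m_def by simp
    have km: "k mod 8 = m + 4" unfolding m_def using False by simp
    have "zeta_coord k = (-1) \<cdot>\<^sub>v unit_vec 4 m" unfolding zeta_coord_def m_def using False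
      by (intro eq_vecI) auto
    then have "Q *\<^sub>v zeta_coord k = (-1) \<cdot>\<^sub>v col Q m"
      using mult_mat_vec[OF Qc, of "unit_vec 4 m" "-1"] mat_vec_unit[OF Qc m] by simp
    also have "\<dots> = (-1) \<cdot>\<^sub>v u m" using colQ[OF m] by simp
    also have "\<dots> = u (m + 4)" using ush by simp
    also have "\<dots> = u k" by (rule u_cong) (use m in \<open>simp add: km\<close>)
    finally show ?thesis .
  qed
  have int1: "\<rho> g * Q = Q * I_rep g" if g: "g \<in> Gaff" for g
  proof -
    obtain a c where gg: "g = (a,c)" by force
    have rc: "\<rho> g \<in> carrier_mat n n" using g by simp
    show ?thesis
    proof (rule mat_col_eqI)
      fix j assume "j < dim_col (Q * I_rep g)"
      then have j: "j < 4" by simp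
      have "col (\<rho> g * Q) j = \<rho> g *\<^sub>v col Q j" by (rule col_mult2[OF rc Qc j])
      also have "\<dots> = \<rho> g *\<^sub>v u j" using colQ[OF j] by simp
      also have "\<dots> = u (a * j + c)" unfolding gg by (rule rho_u) (use g gg in simp)
      also have "\<dots> = Q *\<^sub>v zeta_coord (c + a * j)" unfolding Q_zeta by (simp add: add.commute)
      also have "zeta_coord (c + a * j) = col (I_rep g) j" unfolding gg using j
        by (intro eq_vecI) (auto simp: zeta_coord_def)
      also have "Q *\<^sub>v col (I_rep g) j = col (Q * I_rep g) j" by (rule col_mult2[OF Qc I_rep_car j, symmetric])
      finally show "col (\<rho> g * Q) j = col (Q * I_rep g) j" .
    qed (use rc Qc in auto)
  qed
  have Q4: "Q \<in> carrier_mat 4 4" and L4c: "Lm \<in> carrier_mat 4 4" using Qc Lmc n4 by auto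
  have int2: "Lm * \<rho> g = I_rep g * Lm" if g: "g \<in> Gaff" for g
  proof -
    have rc: "\<rho> g \<in> carrier_mat 4 4" using g n4 car[of g] by simp
    have I: "I_rep g \<in> carrier_mat 4 4" by simp
    have "Lm * \<rho> g = Lm * \<rho> g * (Q * Lm)" using QL n4 L4c rc by simp
    also have "\<dots> = Lm * (\<rho> g * Q) * Lm" using L4c rc Q4 by (simp add: assoc_mult_mat[of _ 4 4 _ 4 _ 4])
    also have "\<dots> = Lm * (Q * I_rep g) * Lm" unfolding int1[OF g] ..
    also have "\<dots> = (Lm * Q) * I_rep g * Lm" using L4c I Q4 by (simp add: assoc_mult_mat[of _ 4 4 _ 4 _ 4])
    also have "\<dots> = I_rep g * Lm" unfolding LQ using I L4c by simp
    finally show ?thesis .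
  qed
  have "invertible_mat Lm" unfolding invertible_mat_def inverts_mat_def
    using LQ QL Lmc Qc n4 by auto
  then show ?thesis unfolding iso_to_I_def using n4 L4c int2 by blast
qed

end


lemma basis_zero: assumes b: "basis_mat n {0\<^sub>v n} k M" shows "k = 0"
proof (rule ccontr)
  assume k: "k \<noteq> 0"
  from b have M: "M \<in> carrier_mat n k" and inj: "\<forall>c\<in>carrier_vec k. M *\<^sub>v c = 0\<^sub>v n \<longrightarrow> c = 0\<^sub>v k"
    and W: "{0\<^sub>v n} = {M *\<^sub>v c | c. c \<in> carrier_vec k}" unfolding basis_mat_def by auto
  have "M *\<^sub>v unit_vec k 0 \<in> {M *\<^sub>v c | c. c \<in> carrier_vec k}" by auto
  then have "M *\<^sub>v unit_vec k 0 = 0\<^sub>v n" using W by auto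
  then have "unit_vec k 0 = (0\<^sub>v k :: rat vec)" using inj by auto
  then show False using k unit_vec_nonzero[of 0 k] by auto
qed

lemma basis_line: assumes y: "y \<in> carrier_vec n" and y0: "y \<noteq> 0\<^sub>v n"
  and b: "basis_mat n {t \<cdot>\<^sub>v y | t. True} k M"
  shows "k = 1 \<and> M \<in> carrier_mat n 1 \<and> (\<exists>\<alpha>. \<alpha> \<noteq> 0 \<and> col M 0 = \<alpha> \<cdot>\<^sub>v y)"
proof -
  from b have M: "M \<in> carrier_mat n k" and inj: "\<And>c. c \<in> carrier_vec k \<Longrightarrow> M *\<^sub>v c = 0\<^sub>v n \<Longrightarrow> c = 0\<^sub>v k"
    and W: "{t \<cdot>\<^sub>v y | t. True} = {M *\<^sub>v c | c. c \<in> carrier_vec k}" unfolding basis_mat_def by auto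
  have inW: "\<exists>s. M *\<^sub>v c = s \<cdot>\<^sub>v y" if "c \<in> carrier_vec k" for c
  proof -
    have "M *\<^sub>v c \<in> {M *\<^sub>v c | c. c \<in> carrier_vec k}" using that by auto
    then show ?thesis unfolding W[symmetric] by auto
  qed
  have k0: "k \<noteq> 0"
  proof
    assume k: "k = 0"
    have "y \<in> {t \<cdot>\<^sub>v y | t. True}" by (rule CollectI, rule exI[of _ 1]) (use y in simp)
    then obtain c where c: "c \<in> carrier_vec k" and yc: "y = M *\<^sub>v c" unfolding W by auto
    have "M *\<^sub>v c = 0\<^sub>v n" using M c k by (intro eq_vecI) (auto simp: scalar_prod_def)
    then show False using yc y0 by simp
  qed
  obtain s0 where s0: "M *\<^sub>v unit_vec k 0 = s0 \<cdot>\<^sub>v y" using inW[of "unit_vec k 0"] by auto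
  have s0nz: "s0 \<noteq> 0"
  proof
    assume "s0 = 0"
    then have "M *\<^sub>v unit_vec k 0 = 0\<^sub>v n" using s0 y by (intro eq_vecI) auto
    then have "unit_vec k 0 = (0\<^sub>v k :: rat vec)" using inj by auto
    then show False using k0 unit_vec_nonzero[of 0 k] by auto
  qed
  have k1: "k = 1"
  proof (rule ccontr)
    assume "k \<noteq> 1"
    then have k2: "1 < k" using k0 by simp
    obtain s1 where s1: "M *\<^sub>v unit_vec k 1 = s1 \<cdot>\<^sub>v y" using inW[of "unit_vec k 1"] by auto
    define c where "c = s1 \<cdot>\<^sub>v unit_vec k 0 + (- s0) \<cdot>\<^sub>v unit_vec k 1"
    have cc: "c \<in> carrier_vec k" unfolding c_def by simp
    have "M *\<^sub>v c = s1 \<cdot>\<^sub>v (M *\<^sub>v unit_vec k 0) + (- s0) \<cdot>\<^sub>v (M *\<^sub>v unit_vec k 1)"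
      unfolding c_def using M by (simp add: mult_add_distrib_mat_vec[OF M] mult_mat_vec[OF M])
    also have "\<dots> = 0\<^sub>v n" unfolding s0 s1 using y by (intro eq_vecI) auto
    finally have "c = 0\<^sub>v k" using inj cc by auto
    then have "c $ 1 = 0" using k2 by simp
    moreover have "c $ 1 = - s0" unfolding c_def using k2 by simp
    ultimately show False using s0nz by simp
  qed
  have "col M 0 = M *\<^sub>v unit_vec k 0" using M k1 by (intro eq_vecI) auto
  then show ?thesis using k1 M s0 s0nz by auto
qed

lemma pd1: assumes M: "M \<in> carrier_mat n 1" and B: "(B :: rat mat) \<in> carrier_mat n n"
  shows "det (s \<cdot>\<^sub>m (transpose_mat M * B * M)) = s * (col M 0 \<bullet> (B *\<^sub>v col M 0))"
proof -
  have c: "transpose_mat M * B * M \<in> carrier_mat 1 1" using M B by simp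
  have dM: "dim_col M = 1" using M by (metis carrier_matD(2))
  have "det (s \<cdot>\<^sub>m (transpose_mat M * B * M)) = s * det (transpose_mat M * B * M)"
    using c dM by simp
  also have "det (transpose_mat M * B * M) = (transpose_mat M * B * M) $$ (0,0)" by (rule det_single[OF c])
  also have "\<dots> = row (transpose_mat M * B) 0 \<bullet> col M 0" by (rule index_mult_mat(1)) (use M B in auto)
  also have "row (transpose_mat M * B) 0 = vec n (\<lambda>j. row (transpose_mat M) 0 \<bullet> col B j)"
    by (rule row_mult) (use M B in auto)
  also have "row (transpose_mat M) 0 = col M 0" using M by simp
  also have "vec n (\<lambda>j. col M 0 \<bullet> col B j) \<bullet> col M 0 = col M 0 \<bullet> vec n (\<lambda>i. row B i \<bullet> col M 0)"
    by (rule assoc_scalar_prod) (use M B in auto)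
  also have "vec n (\<lambda>i. row B i \<bullet> col M 0) = B *\<^sub>v col M 0" unfolding mult_mat_vec_def using B by simp
  finally show ?thesis .
qed

lemma pd0: assumes M: "M \<in> carrier_mat n 0" and B: "(B :: rat mat) \<in> carrier_mat n n"
  shows "det (s \<cdot>\<^sub>m (transpose_mat M * B * M)) = 1"
proof -
  have c: "transpose_mat M * B * M \<in> carrier_mat 0 0" using M B by simp
  have dM: "dim_col M = 0" using M by (metis carrier_matD(2))
  show ?thesis using c dM by simp
qed

theorem mainTheorem15:
  fixes n k1 k2 :: nat and \<rho> :: "nat \<times> nat \<Rightarrow> rat mat" and B M1 M2 :: "rat mat"
  assumes "irreducible_rep n \<rho>"
    and "invariant_pairing n \<rho> B"
    and "basis_mat n (fixed_space n \<rho> U1) k1 M1"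
    and "basis_mat n (fixed_space n \<rho> U2) k2 M2"
  shows "sq_class_eq (pairing_det U1 B M1 / pairing_det U2 B M2)
           (if iso_to_I n \<rho> then 2 else 1)"
proof -
  interpret irr n \<rho> B using assms(1,2) by unfold_locales
  have irrI: "irr n \<rho> B" using assms(1,2) by unfold_locales
  have z1: "0\<^sub>v n \<in> fixed_space n \<rho> U1" unfolding fix1_iff by (simp add: Gaff_iff)
  show ?thesis
  proof (cases "fixed_space n \<rho> U1 = {0\<^sub>v n}")
    case True
    have f2: "fixed_space n \<rho> U2 = {0\<^sub>v n}" by (rule caseA[OF True])
    have "k1 = 0" using basis_zero assms(3) True by metis
    then have M1: "M1 \<in> carrier_mat n 0" using assms(3) unfolding basis_mat_def by simp
    have "k2 = 0" using basis_zero assms(4) f2 by metis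
    then have M2: "M2 \<in> carrier_mat n 0" using assms(4) unfolding basis_mat_def by simp
    have "pairing_det U1 B M1 = 1" unfolding pairing_det_def by (rule pd0[OF M1 B_car])
    moreover have "pairing_det U2 B M2 = 1" unfolding pairing_det_def by (rule pd0[OF M2 B_car])
    moreover have "\<not> iso_to_I n \<rho>" by (rule not_iso_zero[OF irrI True])
    ultimately show ?thesis unfolding sq_class_eq_def by (intro exI[of _ 1]) simp
  next
    case False
    then obtain v where v: "v \<in> fixed_space n \<rho> U1" "v \<noteq> 0\<^sub>v n" using z1 by blast
    obtain w L where w: "w \<in> fixed_space n \<rho> U1" "w \<noteq> 0\<^sub>v n" and L: "L \<in> {lamI, lam2, lamT, lamC}"
      and eig: "\<forall>a. op a w = L a \<cdot>\<^sub>v w" using eigen_exists[OF v] by blast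
    interpret cls n \<rho> B w L using w L eig by unfold_locales auto
    obtain b0 h where rank: "\<forall>a<8. \<forall>b<8. Hf L a b * Hf L b0 b0 = Hf L b0 b * Hf L a b0"
      and hb: "Hf L b0 b0 = h" and b0: "b0 < 8" and hc: "h = (if L = lamI then 1/2 else 1)"
      and L4: "L \<noteq> lamI \<Longrightarrow> L 4 = 1"
    proof -
      consider "L = lamI" | "L = lam2" | "L = lamT" | "L = lamC" using L by blast
      then show ?thesis
      proof cases
        case 1
        have r: "\<forall>a<8. \<forall>b<8. Hf L a b * Hf L 1 1 = Hf L 1 b * Hf L a 1" using rankI 1 by simp
        show ?thesis by (rule that[of 1 "1/2", OF r]) (simp_all add: 1 HI)
      next
        case 2
        have l4: "lam2 4 = 1" by (simp add: lam2_def)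
        have "lam2 4 \<noteq> lamI 4" by (simp add: lam2_def lamI_def)
        then have ne: "lam2 \<noteq> lamI" by auto
        have r: "\<forall>a<8. \<forall>b<8. Hf L a b * Hf L 0 0 = Hf L 0 b * Hf L a 0" using rank2 2 by simp
        show ?thesis by (rule that[of 0 1, OF r]) (simp_all add: 2 H2 ne l4)
      next
        case 3
        have l4: "lamT 4 = 1" by (simp add: lamT_def)
        have "lamT 4 \<noteq> lamI 4" by (simp add: lamT_def lamI_def)
        then have ne: "lamT \<noteq> lamI" by auto
        have r: "\<forall>a<8. \<forall>b<8. Hf L a b * Hf L 0 0 = Hf L 0 b * Hf L a 0" using rankT 3 by simp
        show ?thesis by (rule that[of 0 1, OF r]) (simp_all add: 3 HT ne l4)
      next
        case 4
        have l4: "lamC 4 = 1" by (simp add: lamC_def)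
        have "lamC 4 \<noteq> lamI 4" by (simp add: lamC_def lamI_def)
        then have ne: "lamC \<noteq> lamI" by auto
        have r: "\<forall>a<8. \<forall>b<8. Hf L a b * Hf L 0 0 = Hf L 0 b * Hf L a 0" using rankC 4 by simp
        show ?thesis by (rule that[of 0 1, OF r]) (simp_all add: 4 HC ne l4)
      qed
    qed
    have h0: "h \<noteq> 0" using hc by simp
    let ?y = "P2 (u b0)"
    have f2: "fixed_space n \<rho> U2 = {t \<cdot>\<^sub>v ?y | t. True}" using fix2_eq(1)[OF rank _ b0] hb h0 by simp
    have pyy: "pr ?y ?y = h * N" using fix2_eq(2)[OF rank _ b0] hb h0 by simp
    have yc: "?y \<in> carrier_vec n" by simp
    have y0: "?y \<noteq> 0\<^sub>v n"
    proof
      assume "?y = 0\<^sub>v n"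
      then have "pr ?y ?y = 0" by (simp add: pr_zero_r)
      then show False using pyy h0 N0 by simp
    qed
    have b1: "k1 = 1 \<and> M1 \<in> carrier_mat n 1 \<and> (\<exists>\<alpha>. \<alpha> \<noteq> 0 \<and> col M1 0 = \<alpha> \<cdot>\<^sub>v w)"
      by (rule basis_line[OF wc w0]) (use assms(3) fix1_eq in simp)
    then obtain \<alpha> where M1: "M1 \<in> carrier_mat n 1" and al: "\<alpha> \<noteq> 0" and c1: "col M1 0 = \<alpha> \<cdot>\<^sub>v w" by blast
    have b2: "k2 = 1 \<and> M2 \<in> carrier_mat n 1 \<and> (\<exists>\<beta>. \<beta> \<noteq> 0 \<and> col M2 0 = \<beta> \<cdot>\<^sub>v ?y)"
      by (rule basis_line[OF yc y0]) (use assms(4) f2 in simp)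
    then obtain \<beta> where M2: "M2 \<in> carrier_mat n 1" and be: "\<beta> \<noteq> 0" and c2: "col M2 0 = \<beta> \<cdot>\<^sub>v ?y" by blast
    have pd_1: "pairing_det U1 B M1 = (1/4) * (\<alpha> * \<alpha> * N)"
      unfolding pairing_det_def card_U1 pd1[OF M1 B_car] c1 pr_def[symmetric]
      by (simp add: pr_smult_l pr_smult_r)
    have pd_2: "pairing_det U2 B M2 = (1/4) * (\<beta> * \<beta> * (h * N))"
      unfolding pairing_det_def card_U2 pd1[OF M2 B_car] c2 pr_def[symmetric]
      by (simp add: pr_smult_l pr_smult_r pyy)
    have iso: "iso_to_I n \<rho> \<longleftrightarrow> L = lamI"
      using iso_I not_iso L4 by blast
    have ratio: "pairing_det U1 B M1 / pairing_det U2 B M2 = (1 / h) * (\<alpha> / \<beta>)^2"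
      unfolding pd_1 pd_2 using N0 h0 be by (simp add: field_simps power2_eq_square)
    show ?thesis unfolding sq_class_eq_def ratio iso
      by (rule exI[of _ "\<alpha> / \<beta>"]) (use al be hc in auto)
  qed
qed


end
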